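(* For any $\gamma,\alpha\in(0,1)$, there exists $\delta_{\gamma,\alpha}>0$ such that $\omega^*(\mathrm{CLONE}_{\gamma,\alpha})\le (1-\gamma)+\gamma\,\omega^*(\mathrm{CHSH})-\delta_{\gamma,\alpha}$.
   Context: $\omega^*(G)$ denotes the quantum value (supremum of winning probabilities over quantum strategies) of a game $G$. $\omega^*(\mathrm{CHSH})=\frac12\left(1+\frac1{\sqrt2}\right)$ is the quantum value of the CHSH game (inputs $x,y\in\{0,1\}$ uniform, outputs $a,b\in\{0,1\}$, win iff $a\oplus b=x\cdot y$). The game $\mathrm{CLONE}_{\gamma,\alpha}$ has four players Alice, Barlie, Bob, Charlie. Initially Alice and Barlie share an arbitrary entangled state. Round 1 (no communication): Alice receives uniform $x\in\{0,1\}$; Barlie independently receives $u\in\{0,1,\mathrm{keep}\}$ with $\Pr[u=\mathrm{keep}]=1-\gamma$, $\Pr[u=0]=\Pr[u=1]=\gamma/2$; Alice outputs $a\in\{0,1\}$ and Barlie outputs $s\in\{0,1\}$. Then Barlie applies an arbitrary channel to his registers and distributes the result between Bob and Charlie, who do not communicate afterwards. Round 2: Bob receives $y$ and Charlie receives $z$, where independently $y=\perp$ with probability $\alpha$ and $y=x$ otherwise, and likewise $z=\perp$ with probability $\alpha$ and $z=x$ otherwise; they output $b,c\in\{0,1\}$. The players win iff either ($u\neq\mathrm{keep}$ and $a\oplus s=x\cdot u$) or ($u=\mathrm{keep}$ and ($y=\perp$ or $z=\perp$ or $b=c=a$)). *)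

theory Defs
  imports "Jordan_Normal_Form.Matrix"
begin

definition ctrace :: "complex mat \<Rightarrow> complex" where
  "ctrace M = (\<Sum>i<dim_row M. M $$ (i, i))"

definition adj :: "complex mat \<Rightarrow> complex mat" where
  "adj M = mat (dim_col M) (dim_row M) (\<lambda>(i, j). cnj (M $$ (j, i)))"

definition msum :: "nat \<Rightarrow> nat \<Rightarrow> ('i \<Rightarrow> complex mat) \<Rightarrow> 'i set \<Rightarrow> complex mat" where
  "msum r c F I = mat r c (\<lambda>(i, j). \<Sum>k\<in>I. F k $$ (i, j))"

definition kron :: "complex mat \<Rightarrow> complex mat \<Rightarrow> complex mat" where
  "kron A B = mat (dim_row A * dim_row B) (dim_col A * dim_col B)
     (\<lambda>(i, j). A $$ (i div dim_row B, j div dim_col B) * B $$ (i mod dim_row B, j mod dim_col B))"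

definition psd :: "nat \<Rightarrow> complex mat \<Rightarrow> bool" where
  "psd n M \<longleftrightarrow> M \<in> carrier_mat n n \<and>
     (\<forall>v :: nat \<Rightarrow> complex.
        let q = (\<Sum>i<n. \<Sum>j<n. cnj (v i) * M $$ (i, j) * v j) in Im q = 0 \<and> Re q \<ge> 0)"

definition density :: "nat \<Rightarrow> complex mat \<Rightarrow> bool" where
  "density n \<rho> \<longleftrightarrow> psd n \<rho> \<and> ctrace \<rho> = 1"

definition povm2 :: "nat \<Rightarrow> (nat \<Rightarrow> complex mat) \<Rightarrow> bool" where
  "povm2 n E \<longleftrightarrow> psd n (E 0) \<and> psd n (E 1) \<and> E 0 + E 1 = 1\<^sub>m n"

text \<open>Barlie's question u: Some 0, Some 1, or None (= keep).\<close>

text \<open>A quantum strategy for CLONE (finite dimensional, tensor-product model).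
  dA, dB: dimensions of Alice's and Barlie's registers; dP, dQ: dimensions of
  Bob's and Charlie's registers; rho: shared state on C^dA (x) C^dB.
  A x: Alice's POVM on input x.  Barlie, on question u, applies a quantum instrument
  C^dB -> C^dP (x) C^dQ with outcome s, given by Kraus operators K u s k (k < nK);
  this composes Barlie's measurement with the subsequent channel distributing his
  registers to Bob and Charlie (which may depend on u and s).
  P y, Q z: Bob's and Charlie's POVMs on input x (input \<bottom> never matters for winning).\<close>

definition clone_strategy ::
  "nat \<Rightarrow> nat \<Rightarrow> nat \<Rightarrow> nat \<Rightarrow> nat \<Rightarrow> complex mat \<Rightarrow> (nat \<Rightarrow> nat \<Rightarrow> complex mat)
   \<Rightarrow> (nat option \<Rightarrow> nat \<Rightarrow> nat \<Rightarrow> complex mat)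
   \<Rightarrow> (nat \<Rightarrow> nat \<Rightarrow> complex mat) \<Rightarrow> (nat \<Rightarrow> nat \<Rightarrow> complex mat) \<Rightarrow> bool" where
  "clone_strategy dA dB dP dQ nK \<rho> A K P Q \<longleftrightarrow>
     dA > 0 \<and> dB > 0 \<and> dP > 0 \<and> dQ > 0 \<and>
     density (dA * dB) \<rho> \<and>
     (\<forall>x\<in>{0,1}. povm2 dA (A x)) \<and>
     (\<forall>y\<in>{0,1}. povm2 dP (P y)) \<and>
     (\<forall>z\<in>{0,1}. povm2 dQ (Q z)) \<and>
     (\<forall>u\<in>{Some 0, Some 1, None}. \<forall>s\<in>{0,1}. \<forall>k<nK. K u s k \<in> carrier_mat (dP * dQ) dB) \<and>
     (\<forall>u\<in>{Some 0, Some 1, None}.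
        msum dB dB (\<lambda>(s, k). adj (K u s k) * K u s k) ({0::nat,1} \<times> {..<nK}) = 1\<^sub>m dB)"

definition round1_prob ::
  "nat \<Rightarrow> nat \<Rightarrow> nat \<Rightarrow> complex mat \<Rightarrow> (nat \<Rightarrow> nat \<Rightarrow> complex mat)
   \<Rightarrow> (nat option \<Rightarrow> nat \<Rightarrow> nat \<Rightarrow> complex mat) \<Rightarrow> nat \<Rightarrow> nat \<Rightarrow> nat option \<Rightarrow> nat \<Rightarrow> real" where
  "round1_prob dA dB nK \<rho> A K x a u s =
     Re (ctrace (kron (A x a) (msum dB dB (\<lambda>k. adj (K u s k) * K u s k) {..<nK}) * \<rho>))"

text \<open>Probability, for u = keep and y = z = x, that Alice outputs a, Barlie outputs s,
  and Bob and Charlie both output a.\<close>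
definition keep_prob ::
  "nat \<Rightarrow> nat \<Rightarrow> nat \<Rightarrow> nat \<Rightarrow> complex mat \<Rightarrow> (nat \<Rightarrow> nat \<Rightarrow> complex mat)
   \<Rightarrow> (nat option \<Rightarrow> nat \<Rightarrow> nat \<Rightarrow> complex mat)
   \<Rightarrow> (nat \<Rightarrow> nat \<Rightarrow> complex mat) \<Rightarrow> (nat \<Rightarrow> nat \<Rightarrow> complex mat)
   \<Rightarrow> nat \<Rightarrow> nat \<Rightarrow> nat \<Rightarrow> real" where
  "keep_prob dA dP dQ nK \<rho> A K P Q x a s =
     Re (ctrace (kron (A x a) (kron (P x a) (Q x a)) *
        msum (dA * (dP * dQ)) (dA * (dP * dQ))
          (\<lambda>k. kron (1\<^sub>m dA) (K None s k) * \<rho> * adj (kron (1\<^sub>m dA) (K None s k))) {..<nK}))"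

definition clone_win_prob ::
  "real \<Rightarrow> real \<Rightarrow> nat \<Rightarrow> nat \<Rightarrow> nat \<Rightarrow> nat \<Rightarrow> nat \<Rightarrow> complex mat \<Rightarrow> (nat \<Rightarrow> nat \<Rightarrow> complex mat)
   \<Rightarrow> (nat option \<Rightarrow> nat \<Rightarrow> nat \<Rightarrow> complex mat)
   \<Rightarrow> (nat \<Rightarrow> nat \<Rightarrow> complex mat) \<Rightarrow> (nat \<Rightarrow> nat \<Rightarrow> complex mat) \<Rightarrow> real" where
  "clone_win_prob \<gamma> \<alpha> dA dB dP dQ nK \<rho> A K P Q =
     (\<Sum>x\<in>{0::nat,1}. (1/2) *
        ( (\<Sum>u\<in>{0::nat,1}. (\<gamma>/2) *
              (\<Sum>a\<in>{0::nat,1}. \<Sum>s\<in>{0::nat,1}.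
                 if (a + s) mod 2 = x * u then round1_prob dA dB nK \<rho> A K x a (Some u) s else 0))
        + (1 - \<gamma>) * ((1 - (1 - \<alpha>)^2)
             + (1 - \<alpha>)^2 * (\<Sum>a\<in>{0::nat,1}. \<Sum>s\<in>{0::nat,1}.
                                  keep_prob dA dP dQ nK \<rho> A K P Q x a s))))"

definition clone_value :: "real \<Rightarrow> real \<Rightarrow> real" where
  "clone_value \<gamma> \<alpha> = Sup {clone_win_prob \<gamma> \<alpha> dA dB dP dQ nK \<rho> A K P Q | dA dB dP dQ nK \<rho> A K P Q.
        clone_strategy dA dB dP dQ nK \<rho> A K P Q}"

definition chsh_value :: real where
  "chsh_value = (1 + 1 / sqrt 2) / 2"

end

theory Submission
  imports Defs
begin

definition qf :: "nat \<Rightarrow> (nat \<Rightarrow> nat \<Rightarrow> complex) \<Rightarrow> (nat \<Rightarrow> complex) \<Rightarrow> complex" where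
  "qf n M v = (\<Sum>i<n. \<Sum>j<n. cnj (v i) * M i j * v j)"

definition psdf :: "nat \<Rightarrow> (nat \<Rightarrow> nat \<Rightarrow> complex) \<Rightarrow> bool" where
  "psdf n M \<longleftrightarrow> (\<forall>v. Im (qf n M v) = 0 \<and> Re (qf n M v) \<ge> 0)"

lemma sum_two:
  fixes g :: "nat \<Rightarrow> complex"
  assumes "i < n" "j < n"
  shows "(\<Sum>k<n. g k * ((if k = i then a else 0) + (if k = j then b else 0))) = a * g i + b * g j"
proof -
  have "(\<Sum>k<n. g k * ((if k = i then a else 0) + (if k = j then b else 0)))
     = (\<Sum>k<n. (if k = i then a * g k else 0)) + (\<Sum>k<n. (if k = j then b * g k else 0))"
    by (subst sum.distrib[symmetric], rule sum.cong, auto simp: algebra_simps)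
  also have "\<dots> = a * g i + b * g j" using assms by (simp add: sum.delta)
  finally show ?thesis .
qed

lemma sum_two':
  fixes g :: "nat \<Rightarrow> complex"
  assumes "i < n" "j < n"
  shows "(\<Sum>k<n. cnj ((if k = i then a else 0) + (if k = j then b else 0)) * g k) = cnj a * g i + cnj b * g j"
proof -
  have "(\<Sum>k<n. cnj ((if k = i then a else 0) + (if k = j then b else 0)) * g k)
     = (\<Sum>k<n. (if k = i then cnj a * g k else 0)) + (\<Sum>k<n. (if k = j then cnj b * g k else 0))"
    by (subst sum.distrib[symmetric], rule sum.cong, auto simp: algebra_simps)
  also have "\<dots> = cnj a * g i + cnj b * g j" using assms by (simp add: sum.delta)
  finally show ?thesis .
qed

lemma qf_two:
  assumes "i < n" "j < n"
  shows "qf n M (\<lambda>k. (if k = i then a else 0) + (if k = j then b else 0)) =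
    cnj a * a * M i i + cnj a * b * M i j + cnj b * a * M j i + cnj b * b * M j j"
proof -
  let ?v = "\<lambda>k. (if k = i then a else 0) + (if k = j then b else 0)"
  have "qf n M ?v = (\<Sum>x<n. cnj (?v x) * (\<Sum>y<n. M x y * ?v y))"
    unfolding qf_def by (simp add: sum_distrib_left mult.assoc)
  also have "\<dots> = (\<Sum>x<n. cnj (?v x) * (a * M x i + b * M x j))"
    using sum_two[OF assms, of "\<lambda>y. M _ y"] by simp
  also have "\<dots> = cnj a * (a * M i i + b * M i j) + cnj b * (a * M j i + b * M j j)"
    by (rule sum_two'[OF assms])
  finally show ?thesis by (simp add: algebra_simps)
qed

lemma qf_Suc:
  "qf (Suc n) M w = qf n M w + (\<Sum>i<n. cnj (w i) * M i n) * w n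
     + cnj (w n) * (\<Sum>j<n. M n j * w j) + cnj (w n) * M n n * w n"
proof -
  have "qf (Suc n) M w = (\<Sum>i<Suc n. (\<Sum>j<n. cnj (w i) * M i j * w j) + cnj (w i) * M i n * w n)"
    unfolding qf_def by simp
  also have "\<dots> = qf n M w + (\<Sum>i<n. cnj (w i) * M i n * w n) + ((\<Sum>j<n. cnj (w n) * M n j * w j) + cnj (w n) * M n n * w n)"
    unfolding qf_def by (simp add: sum.distrib)
  also have "(\<Sum>i<n. cnj (w i) * M i n * w n) = (\<Sum>i<n. cnj (w i) * M i n) * w n"
    by (simp add: sum_distrib_right)
  also have "(\<Sum>j<n. cnj (w n) * M n j * w j) = cnj (w n) * (\<Sum>j<n. M n j * w j)"
    by (simp add: sum_distrib_left mult.assoc)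
  finally show ?thesis by (simp add: add.assoc)
qed

lemma qf_cong: "(\<And>i. i < n \<Longrightarrow> v i = w i) \<Longrightarrow> qf n M v = qf n M w"
  unfolding qf_def by (intro sum.cong refl) auto

lemma psdf_diag: assumes "psdf n M" "i < n" shows "Im (M i i) = 0" "Re (M i i) \<ge> 0"
proof -
  have "qf n M (\<lambda>k. (if k = i then 1 else 0) + (if k = i then 0 else 0)) = M i i"
    using qf_two[OF assms(2) assms(2), of M 1 0] by simp
  then show "Im (M i i) = 0" "Re (M i i) \<ge> 0" using assms(1) unfolding psdf_def by metis+
qed

lemma psdf_herm: assumes "psdf n M" "i < n" "j < n" shows "M j i = cnj (M i j)"
proof -
  have q1: "Im (qf n M (\<lambda>k. (if k = i then 1 else 0) + (if k = j then 1 else 0))) = 0"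
    and q2: "Im (qf n M (\<lambda>k. (if k = i then 1 else 0) + (if k = j then \<i> else 0))) = 0"
    using assms(1) unfolding psdf_def by blast+
  have d: "Im (M i i) = 0" "Im (M j j) = 0" using psdf_diag assms by blast+
  from q1 have "Im (M i j + M j i) = 0" using d unfolding qf_two[OF assms(2,3)] by simp
  moreover from q2 have "Re (M i j - M j i) = 0" using d unfolding qf_two[OF assms(2,3)] by simp
  ultimately show ?thesis by (simp add: complex_eq_iff)
qed

lemma psdf_restrict: assumes "psdf (Suc n) M" shows "psdf n M"
  unfolding psdf_def
proof
  fix v
  have e: "qf n M (v(n := 0)) = qf n M v" by (rule qf_cong) auto
  have "qf (Suc n) M (v(n := 0)) = qf n M v"
    unfolding qf_Suc e by simp
  then show "Im (qf n M v) = 0 \<and> 0 \<le> Re (qf n M v)" using assms unfolding psdf_def by metis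
qed

lemma psdf_zero_col: assumes "psdf (Suc n) M" "M n n = 0" "i < n" shows "M i n = 0"
proof (rule ccontr)
  assume ne: "M i n \<noteq> 0"
  define m where "m = M i n"
  define d where "d = Re (M i i)"
  define s :: real where "s = 1 / (d + 1)"
  have dii: "Im (M i i) = 0" "d \<ge> 0" using psdf_diag assms(1) assms(3) unfolding d_def by auto
  have Mii: "M i i = of_real d" using dii(1) unfolding d_def by (simp add: complex_eq_iff)
  have s0: "s > 0" using dii unfolding s_def by auto
  have s1: "s * d < 1" using dii unfolding s_def by (auto simp: field_simps)
  have herm: "M n i = cnj m" using psdf_herm[OF assms(1), of i n] assms(3) unfolding m_def by simp
  define x where "x = - (of_real s) * m"
  have "qf (Suc n) M (\<lambda>k. (if k = i then x else 0) + (if k = n then 1 else 0)) =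
     cnj x * x * M i i + cnj x * M i n + M n i * x"
    using qf_two[of i "Suc n" n M x 1] assms by simp
  also have "\<dots> = cnj x * x * of_real d + cnj x * m + cnj m * x"
    unfolding Mii herm m_def ..
  finally have q: "qf (Suc n) M (\<lambda>k. (if k = i then x else 0) + (if k = n then 1 else 0)) =
     cnj x * x * of_real d + cnj x * m + cnj m * x" .
  have "Re (qf (Suc n) M (\<lambda>k. (if k = i then x else 0) + (if k = n then 1 else 0))) \<ge> 0"
    using assms(1) unfolding psdf_def by blast
  then have "Re (cnj x * x * of_real d + cnj x * m + cnj m * x) \<ge> 0" unfolding q .
  moreover have "Re (cnj x * x * of_real d + cnj x * m + cnj m * x)
      = s * ((Re m)^2 + (Im m)^2) * (s * d - 2)"
    unfolding x_def by (simp add: algebra_simps power2_eq_square)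
  ultimately have A: "s * ((Re m)^2 + (Im m)^2) * (s * d - 2) \<ge> 0" by simp
  have B: "(Re m)^2 + (Im m)^2 > 0" using ne unfolding m_def
    by (simp add: complex_eq_iff sum_power2_gt_zero_iff)
  have "s * ((Re m)^2 + (Im m)^2) > 0" using s0 B by simp
  then have "s * d - 2 \<ge> 0" using A by (simp add: zero_le_mult_iff)
  then show False using s1 by simp
qed
lemma psdf_schur:
  assumes P: "psdf (Suc n) M" and pos: "Re (M n n) > 0"
  shows "psdf n (\<lambda>i j. M i j - M i n * M n j / M n n)"
  unfolding psdf_def
proof
  fix v
  define a where "a = M n n"
  define \<beta> where "\<beta> = (\<Sum>j<n. M n j * v j)"
  define c where "c = - \<beta> / a"
  define w where "w = v(n := c)"
  have a_real: "a = of_real (Re a)" using psdf_diag[OF P, of n] unfolding a_def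
    by (simp add: complex_eq_iff)
  have a0: "a \<noteq> 0" using pos unfolding a_def by auto
  have ca: "cnj a = a" using a_real by (metis complex_cnj_complex_of_real)
  have hn: "\<And>i. i < n \<Longrightarrow> M i n = cnj (M n i)" using psdf_herm[OF P] by (metis less_Suc_eq)
  have e1: "qf n M w = qf n M v" unfolding w_def by (rule qf_cong) auto
  have e2: "(\<Sum>i<n. cnj (w i) * M i n) = cnj \<beta>"
    unfolding \<beta>_def w_def cnj_sum
    by (intro sum.cong refl) (simp add: hn mult.commute)
  have e3: "(\<Sum>j<n. M n j * w j) = \<beta>" unfolding \<beta>_def w_def by (intro sum.cong refl) simp
  have "qf (Suc n) M w = qf n M v + cnj \<beta> * c + cnj c * \<beta> + cnj c * a * c"
    unfolding qf_Suc e1 e2 e3 by (simp add: w_def a_def)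
  also have "\<dots> = qf n M v - cnj \<beta> * \<beta> / a"
    unfolding c_def using a0 ca by (simp add: field_simps)
  also have "qf n M v - cnj \<beta> * \<beta> / a = qf n (\<lambda>i j. M i j - M i n * M n j / M n n) v"
  proof -
    have "qf n (\<lambda>i j. M i j - M i n * M n j / M n n) v =
       qf n M v - (\<Sum>i<n. \<Sum>j<n. (cnj (v i) * M i n) * (M n j * v j) / a)"
      unfolding qf_def a_def by (simp add: sum_subtractf algebra_simps diff_divide_distrib)
    also have "(\<Sum>i<n. \<Sum>j<n. (cnj (v i) * M i n) * (M n j * v j) / a) =
       (\<Sum>i<n. cnj (v i) * M i n) * (\<Sum>j<n. M n j * v j) / a"
      by (simp add: sum_distrib_left sum_distrib_right sum_divide_distrib, rule sum.swap)
    also have "(\<Sum>i<n. cnj (v i) * M i n) = cnj \<beta>"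
      unfolding \<beta>_def cnj_sum
      by (intro sum.cong refl) (simp add: hn mult.commute)
    finally show ?thesis unfolding \<beta>_def by simp
  qed
  finally have "qf (Suc n) M w = qf n (\<lambda>i j. M i j - M i n * M n j / M n n) v" .
  then show "Im (qf n (\<lambda>i j. M i j - M i n * M n j / M n n) v) = 0 \<and>
      0 \<le> Re (qf n (\<lambda>i j. M i j - M i n * M n j / M n n) v)"
    using P unfolding psdf_def by metis
qed

lemma psdf_gram:
  "psdf n M \<Longrightarrow> \<exists>W. \<forall>i<n. \<forall>j<n. M i j = (\<Sum>k<n. W i k * cnj (W j k))"
proof (induction n arbitrary: M)
  case 0
  then show ?case by auto
next
  case (Suc n)
  note P = Suc.prems
  have d: "Im (M n n) = 0" "Re (M n n) \<ge> 0" using psdf_diag[OF P, of n] by auto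
  show ?case
  proof (cases "Re (M n n) = 0")
    case True
    then have z: "M n n = 0" using d by (simp add: complex_eq_iff)
    have col: "\<And>i. i < n \<Longrightarrow> M i n = 0" using psdf_zero_col[OF P z] .
    have row: "\<And>j. j < n \<Longrightarrow> M n j = 0"
      using col psdf_herm[OF P] by (metis complex_cnj_zero less_Suc_eq)
    obtain W where W: "\<forall>i<n. \<forall>j<n. M i j = (\<Sum>k<n. W i k * cnj (W j k))"
      using Suc.IH[OF psdf_restrict[OF P]] by blast
    define W' where "W' = (\<lambda>i k. if i < n \<and> k < n then W i k else 0)"
    have "\<forall>i<Suc n. \<forall>j<Suc n. M i j = (\<Sum>k<Suc n. W' i k * cnj (W' j k))"
    proof (intro allI impI)
      fix i j assume i: "i < Suc n" and j: "j < Suc n"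
      show "M i j = (\<Sum>k<Suc n. W' i k * cnj (W' j k))"
      proof (cases "i < n \<and> j < n")
        case True
        then show ?thesis using W unfolding W'_def by (auto intro!: sum.cong)
      next
        case False
        then have "i = n \<or> j = n" using i j by auto
        then have "M i j = 0" using col row z i j by (auto simp: less_Suc_eq)
        moreover have "(\<Sum>k<Suc n. W' i k * cnj (W' j k)) = 0"
          using False unfolding W'_def by (intro sum.neutral) auto
        ultimately show ?thesis by simp
      qed
    qed
    then show ?thesis by blast
  next
    case False
    then have pos: "Re (M n n) > 0" using d by simp
    define a where "a = M n n"
    have a_real: "a = of_real (Re a)" using d unfolding a_def by (simp add: complex_eq_iff)
    obtain W where W: "\<forall>i<n. \<forall>j<n. M i j - M i n * M n j / M n n = (\<Sum>k<n. W i k * cnj (W j k))"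
      using Suc.IH[OF psdf_schur[OF P pos]] by blast
    define r where "r = sqrt (Re a)"
    have r0: "r > 0" using pos unfolding r_def a_def by simp
    have rr0: "r * r = Re a" unfolding r_def using pos unfolding a_def by simp
    have rr: "of_real r * of_real r = a"
      by (subst of_real_mult[symmetric], subst rr0, rule a_real[symmetric])
    define W' where "W' = (\<lambda>i k. if k < n then (if i < n then W i k else 0)
                               else if k = n then M i n / of_real r else 0)"
    have herm: "\<And>i j. i < Suc n \<Longrightarrow> j < Suc n \<Longrightarrow> M j i = cnj (M i j)"
      using psdf_herm[OF P] by blast
    have "\<forall>i<Suc n. \<forall>j<Suc n. M i j = (\<Sum>k<Suc n. W' i k * cnj (W' j k))"
    proof (intro allI impI)
      fix i j assume i: "i < Suc n" and j: "j < Suc n"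
      have s: "(\<Sum>k<Suc n. W' i k * cnj (W' j k)) =
         (\<Sum>k<n. W' i k * cnj (W' j k)) + M i n / of_real r * cnj (M j n / of_real r)"
        unfolding W'_def by simp
      have mr: "M i n / of_real r * cnj (M j n / of_real r) = M i n * M n j / a"
        using herm[of n j] j rr r0
        by (simp add: field_simps)
      show "M i j = (\<Sum>k<Suc n. W' i k * cnj (W' j k))"
      proof (cases "i < n \<and> j < n")
        case True
        have "(\<Sum>k<n. W' i k * cnj (W' j k)) = (\<Sum>k<n. W i k * cnj (W j k))"
          using True unfolding W'_def by (intro sum.cong refl) auto
        moreover have "M i j - M i n * M n j / M n n = (\<Sum>k<n. W i k * cnj (W j k))"
          using W True by blast
        ultimately show ?thesis unfolding s mr a_def by (simp add: diff_eq_eq)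
      next
        case False
        have z: "(\<Sum>k<n. W' i k * cnj (W' j k)) = 0"
          using False i j unfolding W'_def by (intro sum.neutral) (auto simp: less_Suc_eq)
        have "i = n \<or> j = n" using False i j by auto
        then show ?thesis
        proof
          assume "i = n"
          have a0: "M n n \<noteq> 0" using pos by auto
          have "(\<Sum>k<Suc n. W' i k * cnj (W' j k)) = M i n * M n j / a" using s z mr by simp
          then show ?thesis using a0 \<open>i = n\<close> unfolding a_def by simp
        next
          assume "j = n"
          have a0: "M n n \<noteq> 0" using pos by auto
          have "(\<Sum>k<Suc n. W' i k * cnj (W' j k)) = M i n * M n j / a" using s z mr by simp
          then show ?thesis using a0 \<open>j = n\<close> unfolding a_def by simp
        qed
      qed
    qed
    then show ?thesis by blast
  qed
qed

lemma sum_mult_product: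
  "sum h {..<A * B :: nat} = (\<Sum>i\<in>{..<A}. \<Sum>j\<in>{..<B}. h (j + i * B))"
  unfolding sum.nat_group[of h B A, unfolded atLeast0LessThan, symmetric]
proof (rule sum.cong, simp, rule sum.reindex_cong)
  fix i
  show "inj_on (\<lambda>j. j + i * B) {..<B}" by (auto intro!: inj_onI)
  show "{i * B..<i * B + B} = (\<lambda>j. j + i * B) ` {..<B}"
  proof safe
    fix j assume "j \<in> {i * B..<i * B + B}"
    then show "j \<in> (\<lambda>j. j + i * B) ` {..<B}"
      by (auto intro!: image_eqI[of _ _ "j - i * B"])
  qed simp
qed simp

lemma index_mult':
  assumes "A \<in> carrier_mat m n" "B \<in> carrier_mat n p" "i < m" "j < p"
  shows "(A * B) $$ (i, j) = (\<Sum>k<n. A $$ (i, k) * B $$ (k, j))"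
  using assms by (simp add: scalar_prod_def atLeast0LessThan)

lemma adj_carrier[simp]: "A \<in> carrier_mat m n \<Longrightarrow> adj A \<in> carrier_mat n m"
  unfolding adj_def by auto

lemma adj_dims[simp]: "dim_row (adj A) = dim_col A" "dim_col (adj A) = dim_row A"
  unfolding adj_def by auto

lemma adj_index[simp]: "i < dim_col A \<Longrightarrow> j < dim_row A \<Longrightarrow> adj A $$ (i, j) = cnj (A $$ (j, i))"
  unfolding adj_def by auto

lemma adj_adj[simp]: "adj (adj A) = A"
  by (rule eq_matI) auto

lemma adj_mult: assumes "A \<in> carrier_mat m n" "B \<in> carrier_mat n p"
  shows "adj (A * B) = adj B * adj A"
proof (rule eq_matI)
  fix i j assume "i < dim_row (adj B * adj A)" "j < dim_col (adj B * adj A)"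
  then have ij: "i < p" "j < m" using assms by auto
  show "adj (A * B) $$ (i, j) = (adj B * adj A) $$ (i, j)"
  proof -
    have "adj (A * B) $$ (i, j) = cnj ((A * B) $$ (j, i))" using assms ij by simp
    also have "\<dots> = cnj (\<Sum>k<n. A $$ (j, k) * B $$ (k, i))" using index_mult'[OF assms(1) assms(2)] ij by simp
    also have "\<dots> = (\<Sum>k<n. adj B $$ (i, k) * adj A $$ (k, j))"
      unfolding cnj_sum using assms ij by (intro sum.cong refl) (simp add: mult.commute)
    also have "\<dots> = (adj B * adj A) $$ (i, j)"
      using index_mult'[of "adj B" p n "adj A" m i j] assms ij by simp
    finally show ?thesis .
  qed
qed (use assms in auto)

lemma adj_add: assumes "A \<in> carrier_mat m n" "B \<in> carrier_mat m n"
  shows "adj (A + B) = adj A + adj B"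
  by (rule eq_matI) (use assms in auto)

lemma adj_minus: assumes "A \<in> carrier_mat m n" "B \<in> carrier_mat m n"
  shows "adj (A - B) = adj A - adj B"
  by (rule eq_matI) (use assms in auto)

lemma adj_smult: "adj (c \<cdot>\<^sub>m A) = cnj c \<cdot>\<^sub>m adj A"
  by (rule eq_matI) auto

lemma adj_one[simp]: "adj (1\<^sub>m n) = 1\<^sub>m n"
  by (rule eq_matI) auto

lemma adj_zero[simp]: "adj (0\<^sub>m m n) = 0\<^sub>m n m"
  by (rule eq_matI) auto

subsection \<open>Kronecker product\<close>

lemma kron_dims[simp]: "dim_row (kron A B) = dim_row A * dim_row B" "dim_col (kron A B) = dim_col A * dim_col B"
  unfolding kron_def by auto

lemma kron_carrier[simp]: "A \<in> carrier_mat a b \<Longrightarrow> B \<in> carrier_mat c d \<Longrightarrow> kron A B \<in> carrier_mat (a * c) (b * d)"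
  unfolding kron_def by auto

lemma kron_index[simp]: "i < dim_row A * dim_row B \<Longrightarrow> j < dim_col A * dim_col B \<Longrightarrow>
  kron A B $$ (i, j) = A $$ (i div dim_row B, j div dim_col B) * B $$ (i mod dim_row B, j mod dim_col B)"
  unfolding kron_def by auto

lemma div_lt_mult: "(i::nat) < a * c \<Longrightarrow> i div c < a"
  by (simp add: less_mult_imp_div_less)

lemma mod_lt_mult: "(i::nat) < a * c \<Longrightarrow> i mod c < c"
  by (metis mod_less_divisor mult_zero_right not_gr_zero not_less_zero)

lemma kron_mult:
  assumes A: "A \<in> carrier_mat a b" and B: "B \<in> carrier_mat b e"
    and C: "C \<in> carrier_mat c d" and D: "D \<in> carrier_mat d f"
  shows "kron A C * kron B D = kron (A * B) (C * D)"
proof (rule eq_matI)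
  fix i j assume "i < dim_row (kron (A * B) (C * D))" "j < dim_col (kron (A * B) (C * D))"
  then have i: "i < a * c" and j: "j < e * f" using assms by auto
  have i1: "i div c < a" "i mod c < c" using i div_lt_mult mod_lt_mult by auto
  have j1: "j div f < e" "j mod f < f" using j div_lt_mult mod_lt_mult by auto
  have "(kron A C * kron B D) $$ (i, j) = (\<Sum>l<b * d. kron A C $$ (i, l) * kron B D $$ (l, j))"
    by (rule index_mult'[of _ "a * c" "b * d" _ "e * f"]) (use assms i j in auto)
  also have "\<dots> = (\<Sum>p<b. \<Sum>q<d. kron A C $$ (i, q + p * d) * kron B D $$ (q + p * d, j))"
    by (rule sum_mult_product)
  also have "\<dots> = (\<Sum>p<b. \<Sum>q<d. (A $$ (i div c, p) * B $$ (p, j div f)) * (C $$ (i mod c, q) * D $$ (q, j mod f)))"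
  proof (intro sum.cong refl)
    fix p q assume p: "p \<in> {..<b}" and q: "q \<in> {..<d}"
    have "q + p * d < Suc p * d" using q by simp
    also have "\<dots> \<le> b * d" using p by (intro mult_le_mono1) simp
    finally have l: "q + p * d < b * d" .
    have dq: "(q + p * d) div d = p" "(q + p * d) mod d = q" using q by auto
    show "kron A C $$ (i, q + p * d) * kron B D $$ (q + p * d, j) =
        (A $$ (i div c, p) * B $$ (p, j div f)) * (C $$ (i mod c, q) * D $$ (q, j mod f))"
      using assms i j l dq by (simp add: algebra_simps)
  qed
  also have "\<dots> = (\<Sum>p<b. A $$ (i div c, p) * B $$ (p, j div f)) * (\<Sum>q<d. C $$ (i mod c, q) * D $$ (q, j mod f))"
    by (simp add: sum_product)
  also have "\<dots> = (A * B) $$ (i div c, j div f) * (C * D) $$ (i mod c, j mod f)"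
    using index_mult'[OF A B i1(1) j1(1)] index_mult'[OF C D i1(2) j1(2)] by simp
  also have "\<dots> = kron (A * B) (C * D) $$ (i, j)"
    using assms i j by simp
  finally show "(kron A C * kron B D) $$ (i, j) = kron (A * B) (C * D) $$ (i, j)" .
qed (use assms in auto)

lemma kron_one: "kron (1\<^sub>m m) (1\<^sub>m n) = 1\<^sub>m (m * n)"
proof (rule eq_matI)
  fix i j assume "i < dim_row (1\<^sub>m (m * n))" "j < dim_col (1\<^sub>m (m * n))"
  then have i: "i < m * n" and j: "j < m * n" by auto
  have "(i div n = j div n \<and> i mod n = j mod n) = (i = j)"
    by (metis div_mult_mod_eq)
  then show "kron (1\<^sub>m m) (1\<^sub>m n) $$ (i, j) = 1\<^sub>m (m * n) $$ (i, j)"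
    using i j div_lt_mult[OF i] div_lt_mult[OF j] mod_lt_mult[OF i] mod_lt_mult[OF j] by auto
qed auto

lemma kron_add_left: "A \<in> carrier_mat a b \<Longrightarrow> B \<in> carrier_mat a b \<Longrightarrow> C \<in> carrier_mat c d \<Longrightarrow>
  kron (A + B) C = kron A C + kron B C"
  by (rule eq_matI) (auto simp: div_lt_mult mod_lt_mult algebra_simps)

lemma kron_add_right: assumes "A \<in> carrier_mat a b" "B \<in> carrier_mat c d" "C \<in> carrier_mat c d"
  shows "kron A (B + C) = kron A B + kron A C"
proof (rule eq_matI)
  fix i j assume "i < dim_row (kron A B + kron A C)" "j < dim_col (kron A B + kron A C)"
  then have ij: "i < a * c" "j < b * d" using assms by auto
  then have "i mod c < c" "j mod d < d" using mod_lt_mult by auto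
  then show "kron A (B + C) $$ (i, j) = (kron A B + kron A C) $$ (i, j)"
    using assms ij by (simp add: algebra_simps)
qed (use assms in auto)

lemma kron_minus_left: "A \<in> carrier_mat a b \<Longrightarrow> B \<in> carrier_mat a b \<Longrightarrow> C \<in> carrier_mat c d \<Longrightarrow>
  kron (A - B) C = kron A C - kron B C"
  by (rule eq_matI) (auto simp: div_lt_mult mod_lt_mult algebra_simps)

lemma kron_minus_right: assumes "A \<in> carrier_mat a b" "B \<in> carrier_mat c d" "C \<in> carrier_mat c d"
  shows "kron A (B - C) = kron A B - kron A C"
proof (rule eq_matI)
  fix i j assume "i < dim_row (kron A B - kron A C)" "j < dim_col (kron A B - kron A C)"
  then have ij: "i < a * c" "j < b * d" using assms by auto
  then have "i mod c < c" "j mod d < d" using mod_lt_mult by auto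
  then show "kron A (B - C) $$ (i, j) = (kron A B - kron A C) $$ (i, j)"
    using assms ij by (simp add: algebra_simps)
qed (use assms in auto)

lemma kron_smult_left: "kron (k \<cdot>\<^sub>m A) B = k \<cdot>\<^sub>m kron A B"
  by (rule eq_matI) (auto simp: div_lt_mult mod_lt_mult algebra_simps)

lemma kron_smult_right: "kron A (k \<cdot>\<^sub>m B) = k \<cdot>\<^sub>m kron A B"
  by (rule eq_matI) (auto simp: div_lt_mult mod_lt_mult algebra_simps)

lemma adj_kron: "adj (kron A B) = kron (adj A) (adj B)"
  by (rule eq_matI) (auto simp: div_lt_mult mod_lt_mult)

subsection \<open>Trace\<close>

lemma ctrace_mult_comm: assumes "A \<in> carrier_mat m n" "B \<in> carrier_mat n m"
  shows "ctrace (A * B) = ctrace (B * A)"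
proof -
  have "ctrace (A * B) = (\<Sum>i<m. \<Sum>k<n. A $$ (i, k) * B $$ (k, i))"
    unfolding ctrace_def using assms by (intro sum.cong) (auto simp del: index_mult_mat(1) simp: index_mult'[OF assms])
  also have "\<dots> = (\<Sum>k<n. \<Sum>i<m. B $$ (k, i) * A $$ (i, k))"
    by (subst sum.swap) (simp add: mult.commute)
  also have "\<dots> = ctrace (B * A)"
    unfolding ctrace_def using assms by (intro sum.cong) (auto simp del: index_mult_mat(1) simp: index_mult'[OF assms(2) assms(1)])
  finally show ?thesis .
qed

lemma ctrace_add: "A \<in> carrier_mat n n \<Longrightarrow> B \<in> carrier_mat n n \<Longrightarrow> ctrace (A + B) = ctrace A + ctrace B"
  unfolding ctrace_def by (simp add: sum.distrib)

lemma ctrace_minus: "A \<in> carrier_mat n n \<Longrightarrow> B \<in> carrier_mat n n \<Longrightarrow> ctrace (A - B) = ctrace A - ctrace B"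
  unfolding ctrace_def by (simp add: sum_subtractf)

lemma ctrace_smult: "A \<in> carrier_mat n n \<Longrightarrow> ctrace (c \<cdot>\<^sub>m A) = c * ctrace A"
  unfolding ctrace_def by (simp add: sum_distrib_left)

lemma ctrace_adj: "A \<in> carrier_mat n n \<Longrightarrow> ctrace (adj A) = cnj (ctrace A)"
  unfolding ctrace_def by (simp add: cnj_sum)

lemma msum_dims[simp]: "dim_row (msum r c F I) = r" "dim_col (msum r c F I) = c"
  unfolding msum_def by auto

lemma msum_carrier[simp]: "msum r c F I \<in> carrier_mat r c"
  unfolding msum_def by auto

lemma msum_index[simp]: "i < r \<Longrightarrow> j < c \<Longrightarrow> msum r c F I $$ (i, j) = (\<Sum>k\<in>I. F k $$ (i, j))"
  unfolding msum_def by auto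

lemma ctrace_msum: assumes "finite I" "\<And>k. k \<in> I \<Longrightarrow> F k \<in> carrier_mat n n"
  shows "ctrace (msum n n F I) = (\<Sum>k\<in>I. ctrace (F k))"
proof -
  have "ctrace (msum n n F I) = (\<Sum>i<n. \<Sum>k\<in>I. F k $$ (i, i))" unfolding ctrace_def by simp
  also have "\<dots> = (\<Sum>k\<in>I. \<Sum>i<n. F k $$ (i, i))" by (rule sum.swap)
  also have "\<dots> = (\<Sum>k\<in>I. ctrace (F k))" unfolding ctrace_def using assms(2) by (intro sum.cong) auto
  finally show ?thesis .
qed

lemma mult_msum: assumes "finite I" "A \<in> carrier_mat m n" "\<And>k. k \<in> I \<Longrightarrow> F k \<in> carrier_mat n p"
  shows "A * msum n p F I = msum m p (\<lambda>k. A * F k) I"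
proof (rule eq_matI)
  fix i j assume "i < dim_row (msum m p (\<lambda>k. A * F k) I)" "j < dim_col (msum m p (\<lambda>k. A * F k) I)"
  then have ij: "i < m" "j < p" by auto
  have "(A * msum n p F I) $$ (i, j) = (\<Sum>l<n. A $$ (i, l) * (\<Sum>k\<in>I. F k $$ (l, j)))"
    using index_mult'[OF assms(2) msum_carrier ij] ij by (simp del: index_mult_mat(1))
  also have "\<dots> = (\<Sum>k\<in>I. \<Sum>l<n. A $$ (i, l) * F k $$ (l, j))"
    by (simp add: sum_distrib_left, subst sum.swap, simp)
  also have "\<dots> = (\<Sum>k\<in>I. (A * F k) $$ (i, j))"
    using index_mult'[OF assms(2) assms(3) ij] by (simp del: index_mult_mat(1))
  finally show "(A * msum n p F I) $$ (i, j) = msum m p (\<lambda>k. A * F k) I $$ (i, j)" using ij by simp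
qed (use assms in auto)

lemma msum_mult: assumes "finite I" "A \<in> carrier_mat n p" "\<And>k. k \<in> I \<Longrightarrow> F k \<in> carrier_mat m n"
  shows "msum m n F I * A = msum m p (\<lambda>k. F k * A) I"
proof (rule eq_matI)
  fix i j assume "i < dim_row (msum m p (\<lambda>k. F k * A) I)" "j < dim_col (msum m p (\<lambda>k. F k * A) I)"
  then have ij: "i < m" "j < p" by auto
  have "(msum m n F I * A) $$ (i, j) = (\<Sum>l<n. (\<Sum>k\<in>I. F k $$ (i, l)) * A $$ (l, j))"
    using index_mult'[OF msum_carrier assms(2) ij] ij by (simp del: index_mult_mat(1))
  also have "\<dots> = (\<Sum>k\<in>I. \<Sum>l<n. F k $$ (i, l) * A $$ (l, j))"
    by (simp add: sum_distrib_right, subst sum.swap, simp)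
  also have "\<dots> = (\<Sum>k\<in>I. (F k * A) $$ (i, j))"
    using index_mult'[OF assms(3) assms(2) ij] by (simp del: index_mult_mat(1))
  finally show "(msum m n F I * A) $$ (i, j) = msum m p (\<lambda>k. F k * A) I $$ (i, j)" using ij by simp
qed (use assms in auto)

subsection \<open>Positive semidefinite matrices\<close>

lemma psd_psdf: "psd n M \<longleftrightarrow> M \<in> carrier_mat n n \<and> psdf n (\<lambda>i j. M $$ (i, j))"
  unfolding psd_def psdf_def qf_def Let_def by simp

lemma cnj_mult_self: "Im (cnj z * z) = 0" "Re (cnj z * z) \<ge> 0"
  by (auto simp: algebra_simps)

lemma psd_gramI: assumes X: "X \<in> carrier_mat n m" shows "psd n (X * adj X)"
proof -
  have "psdf n (\<lambda>i j. (X * adj X) $$ (i, j))"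
    unfolding psdf_def
  proof
    fix v
    define u where "u = (\<lambda>k. \<Sum>j<n. cnj (X $$ (j, k)) * v j)"
    have "qf n (\<lambda>i j. (X * adj X) $$ (i, j)) v =
      (\<Sum>i<n. \<Sum>j<n. \<Sum>k<m. (cnj (v i) * X $$ (i, k)) * (cnj (X $$ (j, k)) * v j))"
      unfolding qf_def
    proof (intro sum.cong refl)
      fix i j assume "i \<in> {..<n}" "j \<in> {..<n}"
      then have ij: "i < n" "j < n" by auto
      have "(X * adj X) $$ (i, j) = (\<Sum>k<m. X $$ (i, k) * adj X $$ (k, j))"
        by (rule index_mult'[OF X adj_carrier[OF X] ij])
      also have "\<dots> = (\<Sum>k<m. X $$ (i, k) * cnj (X $$ (j, k)))"
        using X ij by (intro sum.cong) auto
      finally show "cnj (v i) * (X * adj X) $$ (i, j) * v j =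
          (\<Sum>k<m. (cnj (v i) * X $$ (i, k)) * (cnj (X $$ (j, k)) * v j))"
        by (simp add: sum_distrib_left sum_distrib_right algebra_simps)
    qed
    also have "\<dots> = (\<Sum>k<m. (\<Sum>i<n. cnj (v i) * X $$ (i, k)) * (\<Sum>j<n. cnj (X $$ (j, k)) * v j))"
      by (simp add: sum_product, subst sum.swap, subst (2) sum.swap, simp)
    also have "\<dots> = (\<Sum>k<m. cnj (u k) * u k)"
      unfolding u_def cnj_sum by (simp add: mult.commute)
    finally have q: "qf n (\<lambda>i j. (X * adj X) $$ (i, j)) v = (\<Sum>k<m. cnj (u k) * u k)" .
    show "Im (qf n (\<lambda>i j. (X * adj X) $$ (i, j)) v) = 0 \<and> 0 \<le> Re (qf n (\<lambda>i j. (X * adj X) $$ (i, j)) v)"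
      unfolding q Im_sum Re_sum using cnj_mult_self by (simp add: sum_nonneg)
  qed
  then show ?thesis unfolding psd_psdf using X by auto
qed

lemma gram_mat: assumes "psd n M" shows "\<exists>W. W \<in> carrier_mat n n \<and> M = W * adj W"
proof -
  have M: "M \<in> carrier_mat n n" and P: "psdf n (\<lambda>i j. M $$ (i, j))" using assms psd_psdf by auto
  obtain Wf where Wf: "\<forall>i<n. \<forall>j<n. M $$ (i, j) = (\<Sum>k<n. Wf i k * cnj (Wf j k))"
    using psdf_gram[OF P] by blast
  define W where "W = mat n n (\<lambda>(i, k). Wf i k)"
  have W: "W \<in> carrier_mat n n" unfolding W_def by auto
  have "M = W * adj W"
  proof (rule eq_matI)
    fix i j assume "i < dim_row (W * adj W)" "j < dim_col (W * adj W)"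
    then have ij: "i < n" "j < n" using W by auto
    have "(W * adj W) $$ (i, j) = (\<Sum>k<n. W $$ (i, k) * adj W $$ (k, j))"
      by (rule index_mult'[OF W adj_carrier[OF W] ij])
    also have "\<dots> = (\<Sum>k<n. Wf i k * cnj (Wf j k))"
      using ij W unfolding W_def by (intro sum.cong) auto
    finally show "M $$ (i, j) = (W * adj W) $$ (i, j)" using Wf ij by simp
  qed (use M W in auto)
  then show ?thesis using W by blast
qed

lemma psd_carrier: "psd n M \<Longrightarrow> M \<in> carrier_mat n n"
  unfolding psd_def by auto

lemma psd_herm: assumes "psd n M" shows "adj M = M"
proof -
  obtain W where W: "W \<in> carrier_mat n n" "M = W * adj W" using gram_mat[OF assms] by blast
  show ?thesis unfolding W(2) using adj_mult[OF W(1) adj_carrier[OF W(1)]] by simp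
qed

lemma psd_conj: assumes T: "psd m T" and Y: "Y \<in> carrier_mat n m" shows "psd n (Y * T * adj Y)"
proof -
  obtain W where W: "W \<in> carrier_mat m m" "T = W * adj W" using gram_mat[OF T] by blast
  have "Y * T * adj Y = (Y * W) * adj (Y * W)"
  proof -
    have "Y * (W * adj W) = Y * W * adj W" using Y W(1) by (intro assoc_mult_mat[symmetric, of _ n m _ m _ m]) auto
    then have "Y * (W * adj W) * adj Y = Y * W * adj W * adj Y" by simp
    also have "\<dots> = (Y * W) * (adj W * adj Y)" using Y W(1) by (intro assoc_mult_mat[of _ n m _ m _ n]) auto
    finally show ?thesis unfolding W(2) adj_mult[OF Y W(1)] .
  qed
  then show ?thesis using psd_gramI[of "Y * W" n m] Y W(1) by auto
qed

lemma psd_add: assumes "psd n A" "psd n B" shows "psd n (A + B)"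
proof -
  have A: "A \<in> carrier_mat n n" and B: "B \<in> carrier_mat n n" using assms psd_carrier by auto
  have "qf n (\<lambda>i j. (A + B) $$ (i, j)) v = qf n (\<lambda>i j. A $$ (i, j)) v + qf n (\<lambda>i j. B $$ (i, j)) v" for v
    unfolding qf_def using A B by (simp add: sum.distrib[symmetric] algebra_simps)
  then show ?thesis using assms A B unfolding psd_psdf psdf_def by auto
qed

lemma psd_msum: assumes "finite I" "\<And>k. k \<in> I \<Longrightarrow> psd n (F k)" shows "psd n (msum n n F I)"
proof -
  have "qf n (\<lambda>i j. msum n n F I $$ (i, j)) v = (\<Sum>k\<in>I. qf n (\<lambda>i j. F k $$ (i, j)) v)" for v
  proof -
    have "qf n (\<lambda>i j. msum n n F I $$ (i, j)) v = (\<Sum>i<n. \<Sum>j<n. \<Sum>k\<in>I. cnj (v i) * F k $$ (i, j) * v j)"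
      unfolding qf_def by (intro sum.cong refl) (simp add: sum_distrib_left sum_distrib_right)
    also have "\<dots> = (\<Sum>k\<in>I. qf n (\<lambda>i j. F k $$ (i, j)) v)"
      unfolding qf_def
    proof -
      have "(\<Sum>i<n. \<Sum>j<n. \<Sum>k\<in>I. cnj (v i) * F k $$ (i, j) * v j) = (\<Sum>i<n. \<Sum>k\<in>I. \<Sum>j<n. cnj (v i) * F k $$ (i, j) * v j)"
        by (intro sum.cong refl, rule sum.swap)
      also have "\<dots> = (\<Sum>k\<in>I. \<Sum>i<n. \<Sum>j<n. cnj (v i) * F k $$ (i, j) * v j)"
        by (rule sum.swap)
      finally show "(\<Sum>i<n. \<Sum>j<n. \<Sum>k\<in>I. cnj (v i) * F k $$ (i, j) * v j) = (\<Sum>k\<in>I. \<Sum>i<n. \<Sum>j<n. cnj (v i) * F k $$ (i, j) * v j)" .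
    qed
    finally show ?thesis .
  qed
  then show ?thesis using assms unfolding psd_psdf psdf_def
    by (auto simp: Im_sum Re_sum sum_nonneg)
qed

lemma psd_one: "psd n (1\<^sub>m n)"
  using psd_gramI[of "1\<^sub>m n" n n] by simp

lemma psd_kron: assumes "psd a A" "psd b B" shows "psd (a * b) (kron A B)"
proof -
  obtain V where V: "V \<in> carrier_mat a a" "A = V * adj V" using gram_mat[OF assms(1)] by blast
  obtain U where U: "U \<in> carrier_mat b b" "B = U * adj U" using gram_mat[OF assms(2)] by blast
  have "kron A B = kron V U * adj (kron V U)"
    unfolding V(2) U(2) adj_kron using kron_mult[OF V(1) adj_carrier[OF V(1)] U(1) adj_carrier[OF U(1)]] by simp
  then show ?thesis using psd_gramI[of "kron V U" "a * b" "a * b"] V U by auto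
qed

lemma psd_T_TT: assumes T: "psd n T" and S: "psd n (1\<^sub>m n - T)" shows "psd n (T - T * T)"
proof -
  have Tc: "T \<in> carrier_mat n n" using psd_carrier[OF T] .
  define Sm where "Sm = 1\<^sub>m n - T"
  have Sc: "Sm \<in> carrier_mat n n" unfolding Sm_def using Tc by auto
  have TS: "T * Sm = T - T * T" unfolding Sm_def using Tc
    by (subst mult_minus_distrib_mat[of _ n n]) auto
  have ST: "Sm * T = T - T * T" unfolding Sm_def using Tc
    by (subst minus_mult_distrib_mat[of _ n n]) auto
  have TTc: "T * T \<in> carrier_mat n n" using Tc by auto
  have e1: "T * Sm * T = T * T - T * T * T" unfolding TS using Tc
    by (subst minus_mult_distrib_mat[of _ n n]) auto
  have e2: "Sm * T * Sm = (T - T * T) - (T * T - T * T * T)" unfolding ST Sm_def using Tc TTc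
    by (subst mult_minus_distrib_mat[of _ n n]) (auto simp: minus_mult_distrib_mat[of _ n n])
  have "T - T * T = T * Sm * T + Sm * T * Sm"
    unfolding e1 e2 by (rule eq_matI) (use Tc in auto)
  moreover have "psd n (T * Sm * adj T)" using psd_conj[OF S[folded Sm_def] Tc] .
  moreover have "psd n (Sm * T * adj Sm)" using psd_conj[OF T Sc] .
  ultimately show ?thesis using psd_herm[OF T] psd_herm[OF S[folded Sm_def]] psd_add by metis
qed

lemma psd_trace0: assumes P: "psd n X" shows "Re (ctrace X) \<ge> 0"
proof -
  have d: "dim_row X = n" using psd_carrier[OF P] by auto
  have "\<forall>i<n. Re (X $$ (i, i)) \<ge> 0" using P psdf_diag unfolding psd_psdf by blast
  then show ?thesis unfolding ctrace_def d Re_sum by (intro sum_nonneg) auto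
qed

lemma psd_trace_nonneg: assumes M: "psd n M" and R: "psd n \<rho>" shows "Re (ctrace (M * \<rho>)) \<ge> 0"
proof -
  obtain W where W: "W \<in> carrier_mat n n" "\<rho> = W * adj W" using gram_mat[OF R] by blast
  have Mc: "M \<in> carrier_mat n n" using psd_carrier[OF M] .
  have "ctrace (M * \<rho>) = ctrace ((M * W) * adj W)" unfolding W(2) using Mc W(1)
    by (subst assoc_mult_mat[of _ n n _ n _ n]) auto
  also have "\<dots> = ctrace (adj W * (M * W))" using Mc W(1) by (intro ctrace_mult_comm[of _ n n]) auto
  also have "adj W * (M * W) = adj W * M * adj (adj W)" using Mc W(1)
    by (subst assoc_mult_mat[of _ n n _ n _ n]) auto
  finally have tr0: "ctrace (M * \<rho>) = ctrace (adj W * M * adj (adj W))" .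
  then have tr: "ctrace (M * \<rho>) = ctrace (adj W * M * adj (adj W))" .
  have P: "psd n (adj W * M * adj (adj W))" using psd_conj[OF M adj_carrier[OF W(1)]] .
  show ?thesis unfolding tr0 by (rule psd_trace0[OF P])
qed

lemma carrier_iff: "(A \<in> carrier_mat a b) = (dim_row A = a \<and> dim_col A = b)"
  unfolding carrier_mat_def by auto

lemma carrier_self: "A \<in> carrier_mat (dim_row A) (dim_col A)" by auto

lemma addm: "dim_row A = dim_row B \<Longrightarrow> dim_col A = dim_col B \<Longrightarrow> dim_col B = dim_row C \<Longrightarrow>
  ((A :: complex mat) + B) * C = A * C + B * C"
  by (rule add_mult_distrib_mat[of _ "dim_row B" "dim_col B" _ _ "dim_col C"]) auto
lemma maddm: "dim_row A = dim_row B \<Longrightarrow> dim_col A = dim_col B \<Longrightarrow> dim_col C = dim_row B \<Longrightarrow>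
  (C :: complex mat) * (A + B) = C * A + C * B"
  by (rule mult_add_distrib_mat[of _ "dim_row C" "dim_row B" _ "dim_col B"]) auto
lemma subm: "dim_row A = dim_row B \<Longrightarrow> dim_col A = dim_col B \<Longrightarrow> dim_col B = dim_row C \<Longrightarrow>
  ((A :: complex mat) - B) * C = A * C - B * C"
  by (rule minus_mult_distrib_mat[of _ "dim_row B" "dim_col B" _ _ "dim_col C"]) auto
lemma msubm: "dim_row A = dim_row B \<Longrightarrow> dim_col A = dim_col B \<Longrightarrow> dim_col C = dim_row B \<Longrightarrow>
  (C :: complex mat) * (A - B) = C * A - C * B"
  by (rule mult_minus_distrib_mat[of _ "dim_row C" "dim_row B" _ "dim_col B"]) auto
lemma smm: "dim_col A = dim_row C \<Longrightarrow> (k \<cdot>\<^sub>m (A :: complex mat)) * C = k \<cdot>\<^sub>m (A * C)"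
  by (rule mult_smult_assoc_mat[of _ "dim_row A" "dim_col A" _ "dim_col C"]) auto
lemma msmm: "dim_col C = dim_row A \<Longrightarrow> (C :: complex mat) * (k \<cdot>\<^sub>m A) = k \<cdot>\<^sub>m (C * A)"
  by (rule mult_smult_distrib[of _ "dim_row C" "dim_row A" _ "dim_col A"]) auto
lemma assm: "dim_col A = dim_row B \<Longrightarrow> dim_col B = dim_row C \<Longrightarrow>
  ((A :: complex mat) * B) * C = A * (B * C)"
  by (rule assoc_mult_mat[of _ "dim_row A" "dim_col A" _ "dim_col B" _ "dim_col C"]) auto
lemma onem_l: "dim_row A = n \<Longrightarrow> 1\<^sub>m n * (A :: complex mat) = A" by simp
lemma onem_r: "dim_col A = n \<Longrightarrow> (A :: complex mat) * 1\<^sub>m n = A" by simp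

lemmas ring_distribs = addm maddm subm msubm smm msmm assm

lemma kaddl: "dim_row A = dim_row B \<Longrightarrow> dim_col A = dim_col B \<Longrightarrow> kron (A + B) C = kron A C + kron B C"
  by (rule kron_add_left[of _ "dim_row B" "dim_col B" _ C "dim_row C" "dim_col C"]) auto
lemma kaddr: "dim_row B = dim_row C \<Longrightarrow> dim_col B = dim_col C \<Longrightarrow> kron A (B + C) = kron A B + kron A C"
  by (rule kron_add_right[of _ "dim_row A" "dim_col A" _ "dim_row C" "dim_col C"]) auto
lemma ksubl: "dim_row A = dim_row B \<Longrightarrow> dim_col A = dim_col B \<Longrightarrow> kron (A - B) C = kron A C - kron B C"
  by (rule kron_minus_left[of _ "dim_row B" "dim_col B" _ C "dim_row C" "dim_col C"]) auto
lemma ksubr: "dim_row B = dim_row C \<Longrightarrow> dim_col B = dim_col C \<Longrightarrow> kron A (B - C) = kron A B - kron A C"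
  by (rule kron_minus_right[of _ "dim_row A" "dim_col A" _ "dim_row C" "dim_col C"]) auto
lemma kmult: "dim_col A = dim_row B \<Longrightarrow> dim_col C = dim_row D \<Longrightarrow> kron A C * kron B D = kron (A * B) (C * D)"
  by (rule kron_mult[of _ "dim_row A" "dim_col A" _ "dim_col B" _ "dim_row C" "dim_col C" _ "dim_col D"]) auto

lemmas kron_distribs = kaddl kaddr ksubl ksubr kron_smult_left kron_smult_right


lemma ctrace_add': "dim_row A = dim_row B \<Longrightarrow> dim_col A = dim_col B \<Longrightarrow> dim_row B \<le> dim_col B \<Longrightarrow>
  ctrace (A + B) = ctrace A + ctrace B"
  unfolding ctrace_def by (simp add: sum.distrib)
lemma ctrace_minus': "dim_row A = dim_row B \<Longrightarrow> dim_col A = dim_col B \<Longrightarrow> dim_row B \<le> dim_col B \<Longrightarrow>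
  ctrace (A - B) = ctrace A - ctrace B"
  unfolding ctrace_def by (simp add: sum_subtractf)
lemma ctrace_smult': "dim_row A \<le> dim_col A \<Longrightarrow> ctrace (c \<cdot>\<^sub>m A) = c * ctrace A"
  unfolding ctrace_def by (simp add: sum_distrib_left)

definition Ev :: "complex mat \<Rightarrow> complex mat \<Rightarrow> real" where
  "Ev \<rho> M = Re (ctrace (M * \<rho>))"

definition ip :: "complex mat \<Rightarrow> complex mat \<Rightarrow> complex mat \<Rightarrow> real" where
  "ip \<rho> X Y = Ev \<rho> (adj X * Y)"

definition nm :: "complex mat \<Rightarrow> complex mat \<Rightarrow> real" where
  "nm \<rho> X = ip \<rho> X X"

abbreviation sq :: "complex mat \<Rightarrow> complex mat \<Rightarrow> bool" where
  "sq \<rho> X \<equiv> X \<in> carrier_mat (dim_row \<rho>) (dim_row \<rho>)"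

lemma Ev_add: "dim_col \<rho> = dim_row \<rho> \<Longrightarrow> sq \<rho> A \<Longrightarrow> sq \<rho> B \<Longrightarrow> Ev \<rho> (A + B) = Ev \<rho> A + Ev \<rho> B"
  unfolding Ev_def by (subst addm) (auto simp: ctrace_add')

lemma Ev_minus: "dim_col \<rho> = dim_row \<rho> \<Longrightarrow> sq \<rho> A \<Longrightarrow> sq \<rho> B \<Longrightarrow> Ev \<rho> (A - B) = Ev \<rho> A - Ev \<rho> B"
  unfolding Ev_def by (subst subm) (auto simp: ctrace_minus')

lemma Ev_smult: "dim_col \<rho> = dim_row \<rho> \<Longrightarrow> sq \<rho> A \<Longrightarrow> Ev \<rho> (of_real c \<cdot>\<^sub>m A) = c * Ev \<rho> A"
  unfolding Ev_def by (subst smm) (auto simp: ctrace_smult')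

lemma Ev_one: "ctrace \<rho> = 1 \<Longrightarrow> Ev \<rho> (1\<^sub>m (dim_row \<rho>)) = 1"
  unfolding Ev_def by simp

lemma Ev_psd: "psd n \<rho> \<Longrightarrow> psd n M \<Longrightarrow> Ev \<rho> M \<ge> 0"
  unfolding Ev_def by (rule psd_trace_nonneg)

lemma Ev_adj: assumes "psd n \<rho>" "M \<in> carrier_mat n n" shows "Ev \<rho> (adj M) = Ev \<rho> M"
proof -
  have R: "\<rho> \<in> carrier_mat n n" "adj \<rho> = \<rho>" using assms(1) psd_carrier psd_herm by auto
  have "ctrace (adj M * \<rho>) = ctrace (adj (adj \<rho> * M))"
    using adj_mult[of "adj \<rho>" n n M n] R assms(2) by simp
  also have "\<dots> = cnj (ctrace (\<rho> * M))" using R assms(2) by (subst ctrace_adj[of _ n]) auto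
  also have "ctrace (\<rho> * M) = ctrace (M * \<rho>)" using R assms(2) by (intro ctrace_mult_comm) auto
  finally show ?thesis unfolding Ev_def by simp
qed

lemma ip_sym: assumes "psd n \<rho>" "X \<in> carrier_mat n n" "Y \<in> carrier_mat n n" shows "ip \<rho> X Y = ip \<rho> Y X"
proof -
  have "adj (adj X * Y) = adj Y * X" using adj_mult[of "adj X" n n Y n] assms by simp
  moreover have "adj X * Y \<in> carrier_mat n n" using assms by (intro mult_carrier_mat[of _ n n]) auto
  ultimately show ?thesis unfolding ip_def using Ev_adj[OF assms(1), of "adj X * Y"] by simp
qed

lemma nm_nonneg: assumes "psd n \<rho>" "X \<in> carrier_mat n n" shows "nm \<rho> X \<ge> 0"
  unfolding nm_def ip_def using Ev_psd[OF assms(1) psd_gramI[of "adj X" n n]] assms by simp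

abbreviation st :: "complex mat \<Rightarrow> bool" where
  "st \<rho> \<equiv> psd (dim_row \<rho>) \<rho>"

lemma st_dims: "st \<rho> \<Longrightarrow> dim_col \<rho> = dim_row \<rho>"
proof -
  assume "st \<rho>"
  then have "\<rho> \<in> carrier_mat (dim_row \<rho>) (dim_row \<rho>)" by (rule psd_carrier)
  then show ?thesis unfolding carrier_mat_def by simp
qed

lemma adj_sq: "sq \<rho> X \<Longrightarrow> sq \<rho> (adj X)" by simp

lemma ip_add_l: assumes "st \<rho>" "sq \<rho> X" "sq \<rho> Y" "sq \<rho> Z" shows "ip \<rho> (X + Y) Z = ip \<rho> X Z + ip \<rho> Y Z"
  unfolding ip_def using assms st_dims[OF assms(1)]
  by (subst adj_add[of _ "dim_row \<rho>" "dim_row \<rho>"], auto, subst addm, auto intro!: Ev_add)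

lemma ip_add_r: assumes "st \<rho>" "sq \<rho> X" "sq \<rho> Y" "sq \<rho> Z" shows "ip \<rho> X (Y + Z) = ip \<rho> X Y + ip \<rho> X Z"
  unfolding ip_def using assms st_dims[OF assms(1)]
  by (subst maddm, auto intro!: Ev_add)

lemma ip_minus_l: assumes "st \<rho>" "sq \<rho> X" "sq \<rho> Y" "sq \<rho> Z" shows "ip \<rho> (X - Y) Z = ip \<rho> X Z - ip \<rho> Y Z"
  unfolding ip_def using assms st_dims[OF assms(1)]
  by (subst adj_minus[of _ "dim_row \<rho>" "dim_row \<rho>"], auto, subst subm, auto intro!: Ev_minus)

lemma ip_minus_r: assumes "st \<rho>" "sq \<rho> X" "sq \<rho> Y" "sq \<rho> Z" shows "ip \<rho> X (Y - Z) = ip \<rho> X Y - ip \<rho> X Z"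
  unfolding ip_def using assms st_dims[OF assms(1)]
  by (subst msubm, auto intro!: Ev_minus)

lemma ip_smult_l: assumes "st \<rho>" "sq \<rho> X" "sq \<rho> Y" shows "ip \<rho> (of_real c \<cdot>\<^sub>m X) Y = c * ip \<rho> X Y"
  unfolding ip_def adj_smult using assms st_dims[OF assms(1)]
  by (subst smm, auto intro!: Ev_smult)

lemma ip_smult_r: assumes "st \<rho>" "sq \<rho> X" "sq \<rho> Y" shows "ip \<rho> X (of_real c \<cdot>\<^sub>m Y) = c * ip \<rho> X Y"
  unfolding ip_def using assms st_dims[OF assms(1)]
  by (subst msmm, auto intro!: Ev_smult)

lemma ip_sym': "st \<rho> \<Longrightarrow> sq \<rho> X \<Longrightarrow> sq \<rho> Y \<Longrightarrow> ip \<rho> X Y = ip \<rho> Y X"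
  by (rule ip_sym) auto

lemma nm_nonneg': "st \<rho> \<Longrightarrow> sq \<rho> X \<Longrightarrow> nm \<rho> X \<ge> 0"
  by (rule nm_nonneg) auto

declare minus_carrier_mat[simp]

lemma nm_add: assumes "st \<rho>" "sq \<rho> X" "sq \<rho> Y" shows "nm \<rho> (X + Y) = nm \<rho> X + nm \<rho> Y + 2 * ip \<rho> X Y"
  unfolding nm_def using assms ip_sym'[OF assms(1) assms(3) assms(2)]
  by (simp add: ip_add_l ip_add_r minus_carrier_mat)

lemma nm_minus: assumes "st \<rho>" "sq \<rho> X" "sq \<rho> Y" shows "nm \<rho> (X - Y) = nm \<rho> X + nm \<rho> Y - 2 * ip \<rho> X Y"
  unfolding nm_def using assms ip_sym'[OF assms(1) assms(3) assms(2)]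
  by (simp add: ip_minus_l ip_minus_r minus_carrier_mat)

lemma nm_smult: assumes "st \<rho>" "sq \<rho> X" shows "nm \<rho> (of_real c \<cdot>\<^sub>m X) = c * c * nm \<rho> X"
  unfolding nm_def using assms by (simp add: ip_smult_l ip_smult_r)

lemma nm_par_add: assumes "st \<rho>" "sq \<rho> X" "sq \<rho> Y" shows "nm \<rho> (X + Y) \<le> 2 * nm \<rho> X + 2 * nm \<rho> Y"
  using nm_add[OF assms] nm_minus[OF assms] nm_nonneg'[of \<rho> "X - Y"] assms by (simp add: minus_carrier_mat)

lemma nm_par_minus: assumes "st \<rho>" "sq \<rho> X" "sq \<rho> Y" shows "nm \<rho> (X - Y) \<le> 2 * nm \<rho> X + 2 * nm \<rho> Y"
  using nm_add[OF assms] nm_minus[OF assms] nm_nonneg'[of \<rho> "X + Y"] assms by (simp add: minus_carrier_mat)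

lemma ip_le: assumes "st \<rho>" "sq \<rho> X" "sq \<rho> Y" shows "2 * ip \<rho> X Y \<le> nm \<rho> X + nm \<rho> Y"
  using nm_minus[OF assms] nm_nonneg'[of \<rho> "X - Y"] assms by (simp add: minus_carrier_mat)

lemma nm_contr: assumes S: "st \<rho>" and X: "sq \<rho> X" and H: "sq \<rho> H" and h: "adj H = H"
  and c: "psd (dim_row \<rho>) (1\<^sub>m (dim_row \<rho>) - H * H)"
  shows "nm \<rho> (H * X) \<le> nm \<rho> X"
proof -
  let ?n = "dim_row \<rho>"
  have "adj (H * X) = adj X * H" using adj_mult[of H ?n ?n X ?n] H X h by simp
  then have e: "adj (H * X) * (H * X) = adj X * (H * H) * X" using H X
    by (simp add: assm)
  have "adj X * X - adj X * (H * H) * X = adj X * (1\<^sub>m ?n - H * H) * adj (adj X)"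
    using H X by (simp add: msubm subm)
  moreover have "psd ?n (adj X * (1\<^sub>m ?n - H * H) * adj (adj X))"
    using psd_conj[OF c, of "adj X" ?n] X by simp
  ultimately have "Ev \<rho> (adj X * X - adj X * (H * H) * X) \<ge> 0"
    using Ev_psd[OF S] by metis
  moreover have c1: "sq \<rho> (adj X * X)" using X by (intro mult_carrier_mat[of _ ?n ?n]) auto
  have c2: "sq \<rho> (H * H)" using H by (intro mult_carrier_mat[of _ ?n ?n]) auto
  have c3: "sq \<rho> (adj X * (H * H))" using X c2 H by (intro mult_carrier_mat[of _ ?n ?n]) auto
  have c4: "sq \<rho> (adj X * (H * H) * X)" using X c3 H by (intro mult_carrier_mat[of _ ?n ?n]) auto
  note c4
  ultimately show ?thesis unfolding nm_def ip_def e using Ev_minus[of \<rho> "adj X * X" "adj X * (H * H) * X"] S st_dims[OF S] c1 c4 by simp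
qed

lemma nm_herm: "st \<rho> \<Longrightarrow> adj A = A \<Longrightarrow> nm \<rho> A = Ev \<rho> (A * A)"
  unfolding nm_def ip_def by simp

lemma contr_nm: assumes S: "st \<rho>" and tr: "ctrace \<rho> = 1" and A: "sq \<rho> A" and h: "adj A = A"
  and c: "psd (dim_row \<rho>) (1\<^sub>m (dim_row \<rho>) - A * A)"
  shows "nm \<rho> A \<le> 1"
proof -
  have AA: "sq \<rho> (A * A)" using A by (intro mult_carrier_mat[of _ "dim_row \<rho>" "dim_row \<rho>"]) auto
  have "Ev \<rho> (1\<^sub>m (dim_row \<rho>) - A * A) \<ge> 0" using Ev_psd[OF S c] .
  then show ?thesis using Ev_minus[of \<rho> "1\<^sub>m (dim_row \<rho>)" "A * A"] st_dims[OF S] AA Ev_one[OF tr]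
    nm_herm[OF S h] by simp
qed

lemma nm_U: assumes S: "st \<rho>" and tr: "ctrace \<rho> = 1" and B: "sq \<rho> B" and h: "adj B = B"
  and c: "psd (dim_row \<rho>) (1\<^sub>m (dim_row \<rho>) - B * B)"
  shows "nm \<rho> (1\<^sub>m (dim_row \<rho>) - B * B) \<le> 1 - nm \<rho> B"
proof -
  let ?n = "dim_row \<rho>"
  define U where "U = 1\<^sub>m ?n - B * B"
  have BB: "sq \<rho> (B * B)" using B by (intro mult_carrier_mat[of _ ?n ?n]) auto
  have U: "sq \<rho> U" unfolding U_def using BB by simp
  have UU: "sq \<rho> (U * U)" using U by (intro mult_carrier_mat[of _ ?n ?n]) auto
  have hU: "adj U = U" using psd_herm[OF c] unfolding U_def .
  have "1\<^sub>m ?n - U = B * B" unfolding U_def using BB by (intro eq_matI) auto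
  moreover have "psd ?n (B * B)" using psd_gramI[of "adj B" ?n ?n] B h by simp
  ultimately have "psd ?n (U - U * U)" using psd_T_TT[of ?n U] c unfolding U_def by metis
  then have "Ev \<rho> (U - U * U) \<ge> 0" using Ev_psd[OF S] by blast
  then have "Ev \<rho> (U * U) \<le> Ev \<rho> U" using Ev_minus[of \<rho> U "U * U"] st_dims[OF S] U UU by simp
  moreover have "Ev \<rho> U = 1 - nm \<rho> B"
    unfolding U_def using Ev_minus[of \<rho> "1\<^sub>m ?n" "B * B"] st_dims[OF S] BB Ev_one[OF tr] nm_herm[OF S h] by simp
  ultimately show ?thesis using nm_herm[OF S hU] unfolding U_def by simp
qed

lemma chsh_identity:
  fixes A0 A1 B0 B1 :: "complex mat" and t :: complex
  assumes c: "A0 \<in> carrier_mat n n" "A1 \<in> carrier_mat n n" "B0 \<in> carrier_mat n n" "B1 \<in> carrier_mat n n"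
   and cm: "B0 * A0 = A0 * B0" "B1 * A0 = A0 * B1" "B0 * A1 = A1 * B0" "B1 * A1 = A1 * B1"
  shows "A0 * A1 + A1 * A0 = (A0 * (A1 - t \<cdot>\<^sub>m (B0 - B1)) + A1 * (A0 - t \<cdot>\<^sub>m (B0 + B1)))
     + (t \<cdot>\<^sub>m ((B0 - B1) * (A0 - t \<cdot>\<^sub>m (B0 + B1))) + t \<cdot>\<^sub>m ((B0 + B1) * (A1 - t \<cdot>\<^sub>m (B0 - B1))))
     + (2 * t * t) \<cdot>\<^sub>m (B0 * B0 - B1 * B1)"
  using c apply (simp add: ring_distribs cm)
  apply (rule eq_matI)
  apply (auto simp: algebra_simps)
  done

lemma sqrt2_facts: "(1 / sqrt 2) * (1 / sqrt 2) = (1/2::real)" "2 * (1 / sqrt 2) = sqrt (2::real)"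
  "sqrt 2 * sqrt 2 = (2::real)" "sqrt (2::real) \<le> 17/12" "sqrt (2::real) > 0"
proof -
  show "(1 / sqrt 2) * (1 / sqrt 2) = (1/2::real)" by (simp add: field_simps)
  show "2 * (1 / sqrt 2) = sqrt (2::real)" by (simp add: field_simps)
  show "sqrt 2 * sqrt 2 = (2::real)" by simp
  show "sqrt (2::real) \<le> 17/12" by (rule real_le_lsqrt) (auto simp: power2_eq_square)
  show "sqrt (2::real) > 0" by simp
qed

lemma chsh_bound:
  fixes \<rho> A0 A1 B0 B1 :: "complex mat"
  assumes S: "st \<rho>" and tr: "ctrace \<rho> = 1"
   and c: "sq \<rho> A0" "sq \<rho> A1" "sq \<rho> B0" "sq \<rho> B1"
   and h: "adj A0 = A0" "adj A1 = A1" "adj B0 = B0" "adj B1 = B1"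
   and p: "psd (dim_row \<rho>) (1\<^sub>m (dim_row \<rho>) - A0 * A0)" "psd (dim_row \<rho>) (1\<^sub>m (dim_row \<rho>) - A1 * A1)"
          "psd (dim_row \<rho>) (1\<^sub>m (dim_row \<rho>) - B0 * B0)" "psd (dim_row \<rho>) (1\<^sub>m (dim_row \<rho>) - B1 * B1)"
   and cm: "B0 * A0 = A0 * B0" "B1 * A0 = A0 * B1" "B0 * A1 = A1 * B0" "B1 * A1 = A1 * B1"
  shows "ip \<rho> A0 B0 + ip \<rho> A0 B1 + ip \<rho> A1 B0 - ip \<rho> A1 B1 \<le> 2 * sqrt 2"
    and "nm \<rho> (A0 * A1 + A1 * A0) \<le> 34 * (2 * sqrt 2 - (ip \<rho> A0 B0 + ip \<rho> A0 B1 + ip \<rho> A1 B0 - ip \<rho> A1 B1))"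
proof -
  let ?n = "dim_row \<rho>"
  define s :: real where "s = 1 / sqrt 2"
  define t where "t = complex_of_real s"
  define X0 where "X0 = A0 - t \<cdot>\<^sub>m (B0 + B1)"
  define X1 where "X1 = A1 - t \<cdot>\<^sub>m (B0 - B1)"
  define cc where "cc = ip \<rho> A0 B0 + ip \<rho> A0 B1 + ip \<rho> A1 B0 - ip \<rho> A1 B1"
  have cX: "sq \<rho> X0" "sq \<rho> X1" unfolding X0_def X1_def using c by auto
  have ss: "s * s = 1/2" "2 * s = sqrt 2" unfolding s_def using sqrt2_facts by auto
  have nX0: "nm \<rho> X0 = nm \<rho> A0 + s * s * (nm \<rho> B0 + nm \<rho> B1 + 2 * ip \<rho> B0 B1) - 2 * s * (ip \<rho> A0 B0 + ip \<rho> A0 B1)"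
    unfolding X0_def t_def using S c
    by (simp add: nm_minus nm_smult nm_add ip_smult_r ip_add_r algebra_simps)
  have nX1: "nm \<rho> X1 = nm \<rho> A1 + s * s * (nm \<rho> B0 + nm \<rho> B1 - 2 * ip \<rho> B0 B1) - 2 * s * (ip \<rho> A1 B0 - ip \<rho> A1 B1)"
    unfolding X1_def t_def using S c
    by (simp add: nm_minus nm_smult ip_smult_r ip_minus_r algebra_simps)
  have nA: "nm \<rho> A0 \<le> 1" "nm \<rho> A1 \<le> 1" "nm \<rho> B0 \<le> 1" "nm \<rho> B1 \<le> 1"
    using contr_nm[OF S tr] c h p by auto
  have nX: "nm \<rho> X0 \<ge> 0" "nm \<rho> X1 \<ge> 0" using nm_nonneg'[OF S] cX by auto
  have key: "sqrt 2 * (2 * sqrt 2 - cc) = (1 - nm \<rho> A0) + (1 - nm \<rho> A1) + (1 - nm \<rho> B0) + (1 - nm \<rho> B1) + nm \<rho> X0 + nm \<rho> X1"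
    unfolding nX0 nX1 cc_def ss using sqrt2_facts(3) by (simp add: algebra_simps)
  have r0: "sqrt (2::real) > 0" by simp
  have "sqrt 2 * (2 * sqrt 2 - cc) \<ge> 0" using key nA nX by linarith
  then have e0: "2 * sqrt 2 - cc \<ge> 0" using r0 by (simp add: zero_le_mult_iff)
  then show "ip \<rho> A0 B0 + ip \<rho> A0 B1 + ip \<rho> A1 B0 - ip \<rho> A1 B1 \<le> 2 * sqrt 2" unfolding cc_def by simp
  define T1 where "T1 = A0 * X1"
  define T2 where "T2 = A1 * X0"
  define T3 where "T3 = t \<cdot>\<^sub>m ((B0 - B1) * X0)"
  define T4 where "T4 = t \<cdot>\<^sub>m ((B0 + B1) * X1)"
  define U0 where "U0 = 1\<^sub>m ?n - B0 * B0"
  define U1 where "U1 = 1\<^sub>m ?n - B1 * B1"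
  have tt: "2 * t * t = 1" unfolding t_def using ss(1)
    by (metis mult.assoc mult.commute of_real_1 of_real_divide of_real_mult of_real_numeral
        nonzero_mult_div_cancel_left zero_neq_numeral times_divide_eq_right)
  have cB: "sq \<rho> (B0 * B0)" "sq \<rho> (B1 * B1)" using mult_carrier_mat[OF c(3) c(3)] mult_carrier_mat[OF c(4) c(4)] by auto
  have "A0 * A1 + A1 * A0 = (T1 + T2) + (T3 + T4) + (2 * t * t) \<cdot>\<^sub>m (B0 * B0 - B1 * B1)"
    unfolding T1_def T2_def T3_def T4_def X0_def X1_def
    by (rule chsh_identity[OF c cm])
  also have "(2 * t * t) \<cdot>\<^sub>m (B0 * B0 - B1 * B1) = U1 - U0"
    unfolding tt U0_def U1_def using cB c(3,4) by (intro eq_matI) auto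
  finally have Z: "A0 * A1 + A1 * A0 = (T1 + T2) + (T3 + T4) + (U1 - U0)" .
  have cBX: "sq \<rho> (B0 * X0)" "sq \<rho> (B1 * X0)" "sq \<rho> (B0 * X1)" "sq \<rho> (B1 * X1)"
    using mult_carrier_mat[OF c(3) cX(1)] mult_carrier_mat[OF c(4) cX(1)]
      mult_carrier_mat[OF c(3) cX(2)] mult_carrier_mat[OF c(4) cX(2)] by auto
  have cT: "sq \<rho> T1" "sq \<rho> T2" "sq \<rho> T3" "sq \<rho> T4" "sq \<rho> U0" "sq \<rho> U1"
    unfolding T1_def T2_def T3_def T4_def U0_def U1_def
    using mult_carrier_mat[OF c(1) cX(2)] mult_carrier_mat[OF c(2) cX(1)] cB
      mult_carrier_mat[OF minus_carrier_mat[OF c(4), of B0] cX(1)]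
      mult_carrier_mat[OF add_carrier_mat[OF c(4), of B0] cX(2)] by auto
  have n1: "nm \<rho> T1 \<le> nm \<rho> X1" unfolding T1_def using nm_contr[OF S cX(2) c(1) h(1) p(1)] .
  have n2: "nm \<rho> T2 \<le> nm \<rho> X0" unfolding T2_def using nm_contr[OF S cX(1) c(2) h(2) p(2)] .
  have b00: "nm \<rho> (B0 * X0) \<le> nm \<rho> X0" using nm_contr[OF S cX(1) c(3) h(3) p(3)] .
  have b10: "nm \<rho> (B1 * X0) \<le> nm \<rho> X0" using nm_contr[OF S cX(1) c(4) h(4) p(4)] .
  have b01: "nm \<rho> (B0 * X1) \<le> nm \<rho> X1" using nm_contr[OF S cX(2) c(3) h(3) p(3)] .
  have b11: "nm \<rho> (B1 * X1) \<le> nm \<rho> X1" using nm_contr[OF S cX(2) c(4) h(4) p(4)] .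
  have "nm \<rho> T3 = s * s * nm \<rho> (B0 * X0 - B1 * X0)" unfolding T3_def t_def using S c cX
    by (simp add: nm_smult subm)
  then have "nm \<rho> T3 = nm \<rho> (B0 * X0 - B1 * X0) / 2" unfolding ss by simp
  then have n3: "nm \<rho> T3 \<le> 2 * nm \<rho> X0" using b00 b10 nm_par_minus[OF S cBX(1) cBX(2)] by simp
  have "nm \<rho> T4 = s * s * nm \<rho> (B0 * X1 + B1 * X1)" unfolding T4_def t_def using S c cX
    by (simp add: nm_smult addm)
  then have "nm \<rho> T4 = nm \<rho> (B0 * X1 + B1 * X1) / 2" unfolding ss by simp
  then have n4: "nm \<rho> T4 \<le> 2 * nm \<rho> X1" using b01 b11 nm_par_add[OF S cBX(3) cBX(4)] by simp
  have u0: "nm \<rho> U0 \<le> 1 - nm \<rho> B0" unfolding U0_def by (rule nm_U[OF S tr c(3) h(3) p(3)])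
  have u1: "nm \<rho> U1 \<le> 1 - nm \<rho> B1" unfolding U1_def by (rule nm_U[OF S tr c(4) h(4) p(4)])
  have g1: "nm \<rho> (T1 + T2) \<le> 2 * nm \<rho> T1 + 2 * nm \<rho> T2" by (rule nm_par_add[OF S cT(1,2)])
  have g2: "nm \<rho> (T3 + T4) \<le> 2 * nm \<rho> T3 + 2 * nm \<rho> T4" by (rule nm_par_add[OF S cT(3,4)])
  have g3: "nm \<rho> ((T1 + T2) + (T3 + T4)) \<le> 2 * nm \<rho> (T1 + T2) + 2 * nm \<rho> (T3 + T4)"
    by (rule nm_par_add[OF S]) (use cT in auto)
  have g4: "nm \<rho> (U1 - U0) \<le> 2 * nm \<rho> U1 + 2 * nm \<rho> U0" by (rule nm_par_minus[OF S cT(6,5)])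
  have g5: "nm \<rho> ((T1 + T2) + (T3 + T4) + (U1 - U0)) \<le> 2 * nm \<rho> ((T1 + T2) + (T3 + T4)) + 2 * nm \<rho> (U1 - U0)"
    by (rule nm_par_add[OF S]) (use cT in auto)
  have h1: "nm \<rho> (T1 + T2) \<le> 2 * nm \<rho> X1 + 2 * nm \<rho> X0" using g1 n1 n2 by linarith
  have h2: "nm \<rho> (T3 + T4) \<le> 4 * nm \<rho> X0 + 4 * nm \<rho> X1" using g2 n3 n4 by linarith
  have h3: "nm \<rho> ((T1 + T2) + (T3 + T4)) \<le> 12 * nm \<rho> X0 + 12 * nm \<rho> X1" using g3 h1 h2 by linarith
  have h4: "nm \<rho> (U1 - U0) \<le> 4 - 2 * nm \<rho> B0 - 2 * nm \<rho> B1" using g4 u0 u1 by linarith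
  have h5: "nm \<rho> ((T1 + T2) + (T3 + T4) + (U1 - U0)) \<le> 24 * nm \<rho> X0 + 24 * nm \<rho> X1 + 8 - 4 * nm \<rho> B0 - 4 * nm \<rho> B1"
    using g5 h3 h4 by linarith
  have ex: "24 * (sqrt 2 * (2 * sqrt 2 - cc)) = 96 - 24 * nm \<rho> A0 - 24 * nm \<rho> A1 - 24 * nm \<rho> B0 - 24 * nm \<rho> B1
     + 24 * nm \<rho> X0 + 24 * nm \<rho> X1" unfolding key by (simp add: algebra_simps)
  have "nm \<rho> (A0 * A1 + A1 * A0) \<le> 24 * (sqrt 2 * (2 * sqrt 2 - cc))"
    unfolding Z ex using h5 nA by linarith
  also have "\<dots> = (24 * sqrt 2) * (2 * sqrt 2 - cc)" by simp
  also have "\<dots> \<le> 34 * (2 * sqrt 2 - cc)"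
    using mult_right_mono[OF _ e0, of "24 * sqrt 2" 34] sqrt2_facts(4) by simp
  finally show "nm \<rho> (A0 * A1 + A1 * A0) \<le> 34 * (2 * sqrt 2 - (ip \<rho> A0 B0 + ip \<rho> A0 B1 + ip \<rho> A1 B0 - ip \<rho> A1 B1))"
    unfolding cc_def .
qed

lemma ip_le_1: assumes S: "st \<rho>" and tr: "ctrace \<rho> = 1" and c: "sq \<rho> X" "sq \<rho> Y" and h: "adj X = X" "adj Y = Y"
  and p: "psd (dim_row \<rho>) (1\<^sub>m (dim_row \<rho>) - X * X)" "psd (dim_row \<rho>) (1\<^sub>m (dim_row \<rho>) - Y * Y)"
  shows "ip \<rho> X Y \<le> 1"
  using ip_le[OF S c] contr_nm[OF S tr c(1) h(1) p(1)] contr_nm[OF S tr c(2) h(2) p(2)] by linarith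

lemma keep_identity:
  fixes A0 A1 P0 Q1 :: "complex mat"
  assumes c: "A0 \<in> carrier_mat n n" "A1 \<in> carrier_mat n n" "P0 \<in> carrier_mat n n" "Q1 \<in> carrier_mat n n"
   and cm: "Q1 * A0 = A0 * Q1" "P0 * A1 = A1 * P0" "Q1 * P0 = P0 * Q1"
  shows "2 \<cdot>\<^sub>m (P0 * Q1) = (A0 * A1 + A1 * A0) - ((Q1 * (A0 - P0) + A0 * (A1 - Q1)) + (P0 * (A1 - Q1) + A1 * (A0 - P0)))"
  using c apply (simp add: ring_distribs cm)
  apply (rule eq_matI)
  apply (auto simp: algebra_simps)
  done

lemma keep_bound:
  fixes \<sigma> A0 A1 P0 Q1 :: "complex mat"
  assumes S: "st \<sigma>" and tr: "ctrace \<sigma> = 1"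
   and c: "sq \<sigma> A0" "sq \<sigma> A1" "sq \<sigma> P0" "sq \<sigma> Q1"
   and h: "adj A0 = A0" "adj A1 = A1" "adj P0 = P0" "adj Q1 = Q1"
   and p: "psd (dim_row \<sigma>) (1\<^sub>m (dim_row \<sigma>) - A0 * A0)" "psd (dim_row \<sigma>) (1\<^sub>m (dim_row \<sigma>) - A1 * A1)"
          "psd (dim_row \<sigma>) (1\<^sub>m (dim_row \<sigma>) - P0 * P0)" "psd (dim_row \<sigma>) (1\<^sub>m (dim_row \<sigma>) - Q1 * Q1)"
   and cm: "Q1 * A0 = A0 * Q1" "P0 * A1 = A1 * P0" "Q1 * P0 = P0 * Q1"
   and pk: "psd (dim_row \<sigma>) ((1\<^sub>m (dim_row \<sigma>) - P0 * P0) * (1\<^sub>m (dim_row \<sigma>) - Q1 * Q1))"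
  shows "nm \<sigma> (A0 * A1 + A1 * A0) \<ge> 2 - 20 * ((1 - ip \<sigma> A0 P0) + (1 - ip \<sigma> A1 Q1))"
proof -
  let ?n = "dim_row \<sigma>"
  define E0 where "E0 = A0 - P0"
  define F1 where "F1 = A1 - Q1"
  define Z where "Z = A0 * A1 + A1 * A0"
  define R1 where "R1 = Q1 * E0 + A0 * F1"
  define R2 where "R2 = P0 * F1 + A1 * E0"
  have cE: "sq \<sigma> E0" "sq \<sigma> F1" unfolding E0_def F1_def using c by auto
  have cZ: "sq \<sigma> Z" unfolding Z_def using mult_carrier_mat[OF c(1) c(2)] mult_carrier_mat[OF c(2) c(1)] by auto
  have cQE: "sq \<sigma> (Q1 * E0)" "sq \<sigma> (A0 * F1)" "sq \<sigma> (P0 * F1)" "sq \<sigma> (A1 * E0)"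
    using mult_carrier_mat[OF c(4) cE(1)] mult_carrier_mat[OF c(1) cE(2)]
      mult_carrier_mat[OF c(3) cE(2)] mult_carrier_mat[OF c(2) cE(1)] by auto
  have cR: "sq \<sigma> R1" "sq \<sigma> R2" unfolding R1_def R2_def using cQE by auto
  have cPQ: "sq \<sigma> (P0 * Q1)" using mult_carrier_mat[OF c(3) c(4)] by auto
  have id: "2 \<cdot>\<^sub>m (P0 * Q1) = Z - (R1 + R2)"
    unfolding Z_def R1_def R2_def E0_def F1_def by (rule keep_identity[OF c cm])
  have "nm \<sigma> (2 \<cdot>\<^sub>m (P0 * Q1)) = 4 * nm \<sigma> (P0 * Q1)"
    using nm_smult[OF S cPQ, of 2] by simp
  then have i1: "4 * nm \<sigma> (P0 * Q1) \<le> 2 * nm \<sigma> Z + 2 * nm \<sigma> (R1 + R2)"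
    using nm_par_minus[OF S cZ, of "R1 + R2"] cR unfolding id by simp
  have i2: "nm \<sigma> (R1 + R2) \<le> 2 * nm \<sigma> R1 + 2 * nm \<sigma> R2" by (rule nm_par_add[OF S cR])
  have i3: "nm \<sigma> R1 \<le> 2 * nm \<sigma> E0 + 2 * nm \<sigma> F1" unfolding R1_def
    using nm_par_add[OF S cQE(1,2)] nm_contr[OF S cE(1) c(4) h(4) p(4)] nm_contr[OF S cE(2) c(1) h(1) p(1)] by linarith
  have i4: "nm \<sigma> R2 \<le> 2 * nm \<sigma> E0 + 2 * nm \<sigma> F1" unfolding R2_def
    using nm_par_add[OF S cQE(3,4)] nm_contr[OF S cE(2) c(3) h(3) p(3)] nm_contr[OF S cE(1) c(2) h(2) p(2)] by linarith
  have nA: "nm \<sigma> A0 \<le> 1" "nm \<sigma> A1 \<le> 1" "nm \<sigma> P0 \<le> 1" "nm \<sigma> Q1 \<le> 1"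
    using contr_nm[OF S tr] c h p by auto
  have e0: "nm \<sigma> E0 = nm \<sigma> A0 + nm \<sigma> P0 - 2 * ip \<sigma> A0 P0" unfolding E0_def by (rule nm_minus[OF S c(1,3)])
  have f1: "nm \<sigma> F1 = nm \<sigma> A1 + nm \<sigma> Q1 - 2 * ip \<sigma> A1 Q1" unfolding F1_def by (rule nm_minus[OF S c(2,4)])
  have l1: "2 * ip \<sigma> A0 P0 \<le> nm \<sigma> A0 + nm \<sigma> P0" by (rule ip_le[OF S c(1,3)])
  have l2: "2 * ip \<sigma> A1 Q1 \<le> nm \<sigma> A1 + nm \<sigma> Q1" by (rule ip_le[OF S c(2,4)])
  have cPP: "sq \<sigma> (P0 * P0)" "sq \<sigma> (Q1 * Q1)" using mult_carrier_mat[OF c(3) c(3)] mult_carrier_mat[OF c(4) c(4)] by auto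
  have cPPQQ: "sq \<sigma> (P0 * P0 * (Q1 * Q1))" using mult_carrier_mat[OF cPP(1) cPP(2)] by auto
  have adjPQ: "adj (P0 * Q1) * (P0 * Q1) = P0 * P0 * (Q1 * Q1)"
  proof -
    have "adj (P0 * Q1) = Q1 * P0" using adj_mult[OF c(3) c(4)] h by simp
    then have "adj (P0 * Q1) * (P0 * Q1) = (Q1 * P0) * (P0 * Q1)" by simp
    also have "\<dots> = (P0 * Q1) * (P0 * Q1)" using cm(3) by simp
    also have "\<dots> = P0 * ((Q1 * P0) * Q1)" using c by (simp add: assm)
    also have "\<dots> = P0 * ((P0 * Q1) * Q1)" using cm(3) by simp
    also have "\<dots> = P0 * P0 * (Q1 * Q1)" using c by (simp add: assm)
    finally show ?thesis .
  qed
  have prod: "(1\<^sub>m ?n - P0 * P0) * (1\<^sub>m ?n - Q1 * Q1) = (1\<^sub>m ?n - P0 * P0) - (Q1 * Q1 - P0 * P0 * (Q1 * Q1))"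
    using c cPP by (simp add: ring_distribs)
  have "Ev \<sigma> ((1\<^sub>m ?n - P0 * P0) * (1\<^sub>m ?n - Q1 * Q1)) \<ge> 0" using Ev_psd[OF S pk] .
  then have "1 - Ev \<sigma> (P0 * P0) - (Ev \<sigma> (Q1 * Q1) - Ev \<sigma> (P0 * P0 * (Q1 * Q1))) \<ge> 0"
    unfolding prod using Ev_minus[OF st_dims[OF S]] Ev_one[OF tr] cPP cPPQQ by simp
  moreover have "nm \<sigma> (P0 * Q1) = Ev \<sigma> (P0 * P0 * (Q1 * Q1))" unfolding nm_def ip_def adjPQ ..
  moreover have "nm \<sigma> P0 = Ev \<sigma> (P0 * P0)" "nm \<sigma> Q1 = Ev \<sigma> (Q1 * Q1)" using nm_herm[OF S] h by auto
  ultimately have lb: "nm \<sigma> (P0 * Q1) \<ge> nm \<sigma> P0 + nm \<sigma> Q1 - 1" by linarith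
  have j1: "nm \<sigma> E0 \<le> 2 - 2 * ip \<sigma> A0 P0" using e0 nA by linarith
  have j2: "nm \<sigma> F1 \<le> 2 - 2 * ip \<sigma> A1 Q1" using f1 nA by linarith
  have j3: "nm \<sigma> (R1 + R2) \<le> 32 - 16 * ip \<sigma> A0 P0 - 16 * ip \<sigma> A1 Q1" using i2 i3 i4 j1 j2 by linarith
  have j4: "nm \<sigma> (P0 * Q1) \<ge> 2 * ip \<sigma> A0 P0 + 2 * ip \<sigma> A1 Q1 - 3" using lb l1 l2 nA by linarith
  have j5: "8 * ip \<sigma> A0 P0 + 8 * ip \<sigma> A1 Q1 - 12 \<le> 2 * nm \<sigma> Z + 64 - 32 * ip \<sigma> A0 P0 - 32 * ip \<sigma> A1 Q1"
    using i1 j3 j4 by linarith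
  have ee: "2 - 20 * ((1 - ip \<sigma> A0 P0) + (1 - ip \<sigma> A1 Q1)) = 20 * ip \<sigma> A0 P0 + 20 * ip \<sigma> A1 Q1 - 38"
    by (simp add: algebra_simps)
  show ?thesis unfolding Z_def[symmetric] ee using j5 by linarith
qed

lemma psd_smult: assumes "psd n A" "c \<ge> 0" shows "psd n (of_real c \<cdot>\<^sub>m A)"
proof -
  have Ac: "A \<in> carrier_mat n n" using psd_carrier[OF assms(1)] .
  have "qf n (\<lambda>i j. (of_real c \<cdot>\<^sub>m A) $$ (i, j)) v = of_real c * qf n (\<lambda>i j. A $$ (i, j)) v" for v
    unfolding qf_def using Ac by (simp add: sum_distrib_left algebra_simps)
  then show ?thesis using assms Ac unfolding psd_psdf psdf_def by auto
qed

lemma obs_props: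
  assumes a0: "psd n a0" and a1: "psd n a1" and s: "a0 + a1 = 1\<^sub>m n"
  shows "adj (a0 - a1) = a0 - a1" "psd n (1\<^sub>m n - (a0 - a1) * (a0 - a1))" "a0 - a1 \<in> carrier_mat n n"
proof -
  have c0: "a0 \<in> carrier_mat n n" and c1: "a1 \<in> carrier_mat n n" using a0 a1 psd_carrier by auto
  show "adj (a0 - a1) = a0 - a1" using adj_minus[OF c0 c1] psd_herm[OF a0] psd_herm[OF a1] by simp
  show "a0 - a1 \<in> carrier_mat n n" using c1 by simp
  have a1e: "a1 = 1\<^sub>m n - a0"
  proof (rule eq_matI)
    fix i j assume ij: "i < dim_row (1\<^sub>m n - a0)" "j < dim_col (1\<^sub>m n - a0)"
    have "(a0 + a1) $$ (i, j) = 1\<^sub>m n $$ (i, j)" using s by simp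
    then have "a0 $$ (i, j) + a1 $$ (i, j) = 1\<^sub>m n $$ (i, j)" using ij c0 c1 by simp
    then show "a1 $$ (i, j) = (1\<^sub>m n - a0) $$ (i, j)" using ij c0 c1 by (simp add: eq_diff_eq add.commute)
  qed (use c0 c1 in auto)
  have cc: "a0 * a0 \<in> carrier_mat n n" using c0 by simp
  have "1\<^sub>m n - (a0 - a1) * (a0 - a1) = of_real 4 \<cdot>\<^sub>m (a0 - a0 * a0)"
    unfolding a1e using c0 cc
    apply (simp add: ring_distribs)
    apply (rule eq_matI)
    apply (auto simp: algebra_simps)
    done
  moreover have "psd n (a0 - a0 * a0)" using psd_T_TT[OF a0] a1 unfolding a1e .
  ultimately show "psd n (1\<^sub>m n - (a0 - a1) * (a0 - a1))" using psd_smult[of n "a0 - a0 * a0" 4] by simp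
qed

lemma kron_1_mult: assumes "Y \<in> carrier_mat a a" "X \<in> carrier_mat b b"
  shows "kron Y (1\<^sub>m b) * kron (1\<^sub>m a) X = kron Y X" "kron (1\<^sub>m a) X * kron Y (1\<^sub>m b) = kron Y X"
  using assms by (auto simp: kmult)

lemma bip_expand:
  assumes S: "st \<rho>" and tr: "ctrace \<rho> = 1" and d: "dim_row \<rho> = m * n"
   and c: "a0 \<in> carrier_mat m m" "a1 \<in> carrier_mat m m" "b0 \<in> carrier_mat n n" "b1 \<in> carrier_mat n n"
   and sa: "a0 + a1 = 1\<^sub>m m" and sb: "b0 + b1 = 1\<^sub>m n"
  shows "Ev \<rho> (kron a0 b0) + Ev \<rho> (kron a1 b1) = (1 + Ev \<rho> (kron (a0 - a1) (b0 - b1))) / 2"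
    "Ev \<rho> (kron a0 b1) + Ev \<rho> (kron a1 b0) = (1 - Ev \<rho> (kron (a0 - a1) (b0 - b1))) / 2"
proof -
  have dc: "dim_col \<rho> = dim_row \<rho>" using st_dims[OF S] .
  have "1\<^sub>m (dim_row \<rho>) = kron (a0 + a1) (b0 + b1)" unfolding sa sb d kron_one ..
  then have "1 = Ev \<rho> (kron (a0 + a1) (b0 + b1))" using Ev_one[OF tr] by simp
  also have "\<dots> = Ev \<rho> (kron a0 b0) + Ev \<rho> (kron a0 b1) + (Ev \<rho> (kron a1 b0) + Ev \<rho> (kron a1 b1))"
    using c d dc by (simp add: kron_distribs Ev_add)
  finally have one: "1 = Ev \<rho> (kron a0 b0) + Ev \<rho> (kron a0 b1) + (Ev \<rho> (kron a1 b0) + Ev \<rho> (kron a1 b1))" .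
  have E: "Ev \<rho> (kron (a0 - a1) (b0 - b1)) = Ev \<rho> (kron a0 b0) - Ev \<rho> (kron a0 b1) - (Ev \<rho> (kron a1 b0) - Ev \<rho> (kron a1 b1))"
    using c d dc by (simp add: kron_distribs Ev_minus)
  show "Ev \<rho> (kron a0 b0) + Ev \<rho> (kron a1 b1) = (1 + Ev \<rho> (kron (a0 - a1) (b0 - b1))) / 2"
    using one E by simp
  show "Ev \<rho> (kron a0 b1) + Ev \<rho> (kron a1 b0) = (1 - Ev \<rho> (kron (a0 - a1) (b0 - b1))) / 2"
    using one E by simp
qed

lemma trip_expand:
  assumes S: "st \<sigma>" and tr: "ctrace \<sigma> = 1" and d: "dim_row \<sigma> = a * (p * q)"
   and c: "a0 \<in> carrier_mat a a" "a1 \<in> carrier_mat a a" "p0 \<in> carrier_mat p p" "p1 \<in> carrier_mat p p"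
          "q0 \<in> carrier_mat q q" "q1 \<in> carrier_mat q q"
   and sa: "a0 + a1 = 1\<^sub>m a" and sp: "p0 + p1 = 1\<^sub>m p" and sq: "q0 + q1 = 1\<^sub>m q"
  shows "Ev \<sigma> (kron a0 (kron p0 q0)) + Ev \<sigma> (kron a1 (kron p1 q1)) =
     (1 + Ev \<sigma> (kron (a0 - a1) (kron (p0 - p1) (q0 + q1))) + Ev \<sigma> (kron (a0 - a1) (kron (p0 + p1) (q0 - q1)))
        + Ev \<sigma> (kron (a0 + a1) (kron (p0 - p1) (q0 - q1)))) / 4"
proof -
  have dc: "dim_col \<sigma> = dim_row \<sigma>" using st_dims[OF S] .
  have "1\<^sub>m (dim_row \<sigma>) = kron (a0 + a1) (kron (p0 + p1) (q0 + q1))" unfolding sa sp sq d kron_one ..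
  then have "1 = Ev \<sigma> (kron (a0 + a1) (kron (p0 + p1) (q0 + q1)))" using Ev_one[OF tr] by simp
  then have one: "1 = Ev \<sigma> (kron a0 (kron p0 q0)) + Ev \<sigma> (kron a0 (kron p0 q1)) + (Ev \<sigma> (kron a0 (kron p1 q0)) + Ev \<sigma> (kron a0 (kron p1 q1)))
      + (Ev \<sigma> (kron a1 (kron p0 q0)) + Ev \<sigma> (kron a1 (kron p0 q1)) + (Ev \<sigma> (kron a1 (kron p1 q0)) + Ev \<sigma> (kron a1 (kron p1 q1))))"
    using c d dc by (simp add: kron_distribs Ev_add)
  have e1: "Ev \<sigma> (kron (a0 - a1) (kron (p0 - p1) (q0 + q1))) =
      Ev \<sigma> (kron a0 (kron p0 q0)) + Ev \<sigma> (kron a0 (kron p0 q1)) - (Ev \<sigma> (kron a0 (kron p1 q0)) + Ev \<sigma> (kron a0 (kron p1 q1)))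
      - (Ev \<sigma> (kron a1 (kron p0 q0)) + Ev \<sigma> (kron a1 (kron p0 q1)) - (Ev \<sigma> (kron a1 (kron p1 q0)) + Ev \<sigma> (kron a1 (kron p1 q1))))"
    using c d dc by (simp add: kron_distribs Ev_add Ev_minus)
  have e2: "Ev \<sigma> (kron (a0 - a1) (kron (p0 + p1) (q0 - q1))) =
      Ev \<sigma> (kron a0 (kron p0 q0)) - Ev \<sigma> (kron a0 (kron p0 q1)) + (Ev \<sigma> (kron a0 (kron p1 q0)) - Ev \<sigma> (kron a0 (kron p1 q1)))
      - (Ev \<sigma> (kron a1 (kron p0 q0)) - Ev \<sigma> (kron a1 (kron p0 q1)) + (Ev \<sigma> (kron a1 (kron p1 q0)) - Ev \<sigma> (kron a1 (kron p1 q1))))"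
    using c d dc by (simp add: kron_distribs Ev_add Ev_minus)
  have e3: "Ev \<sigma> (kron (a0 + a1) (kron (p0 - p1) (q0 - q1))) =
      Ev \<sigma> (kron a0 (kron p0 q0)) - Ev \<sigma> (kron a0 (kron p0 q1)) - (Ev \<sigma> (kron a0 (kron p1 q0)) - Ev \<sigma> (kron a0 (kron p1 q1)))
      + (Ev \<sigma> (kron a1 (kron p0 q0)) - Ev \<sigma> (kron a1 (kron p0 q1)) - (Ev \<sigma> (kron a1 (kron p1 q0)) - Ev \<sigma> (kron a1 (kron p1 q1))))"
    using c d dc by (simp add: kron_distribs Ev_add Ev_minus)
  show ?thesis using one e1 e2 e3 by simp
qed

lemma kron_msum_right: assumes "finite I" "Y \<in> carrier_mat a b" "\<And>k. k \<in> I \<Longrightarrow> F k \<in> carrier_mat c d"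
  shows "kron Y (msum c d F I) = msum (a * c) (b * d) (\<lambda>k. kron Y (F k)) I"
proof (rule eq_matI)
  fix i j assume ij: "i < dim_row (msum (a * c) (b * d) (\<lambda>k. kron Y (F k)) I)" "j < dim_col (msum (a * c) (b * d) (\<lambda>k. kron Y (F k)) I)"
  then have i: "i < a * c" and j: "j < b * d" by auto
  have m: "i mod c < c" "j mod d < d" using i j mod_lt_mult by auto
  have "kron Y (msum c d F I) $$ (i, j) = (\<Sum>k\<in>I. Y $$ (i div c, j div d) * F k $$ (i mod c, j mod d))"
    using assms i j m by (simp add: sum_distrib_left)
  also have "\<dots> = (\<Sum>k\<in>I. kron Y (F k) $$ (i, j))"
  proof (rule sum.cong[OF refl])
    fix k assume k: "k \<in> I"
    then have Fk: "F k \<in> carrier_mat c d" using assms(3) by blast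
    show "Y $$ (i div c, j div d) * F k $$ (i mod c, j mod d) = kron Y (F k) $$ (i, j)"
      using Fk assms(2) i j by simp
  qed
  finally show "kron Y (msum c d F I) $$ (i, j) = msum (a * c) (b * d) (\<lambda>k. kron Y (F k)) I $$ (i, j)"
    using i j by simp
qed (use assms in auto)

lemma msum_pair: assumes "finite I"
  shows "msum r c (\<lambda>(s, k). F s k) ({0::nat, 1} \<times> I) = msum r c (F 0) I + msum r c (F 1) I"
proof (rule eq_matI)
  fix i j assume "i < dim_row (msum r c (F 0) I + msum r c (F 1) I)" "j < dim_col (msum r c (F 0) I + msum r c (F 1) I)"
  then have ij: "i < r" "j < c" by auto
  have "(\<Sum>x\<in>{0::nat, 1} \<times> I. (case x of (s, k) \<Rightarrow> F s k) $$ (i, j)) = (\<Sum>s\<in>{0::nat,1}. \<Sum>k\<in>I. F s k $$ (i, j))"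
    by (subst sum.cartesian_product) (simp add: case_prod_unfold)
  also have "\<dots> = (\<Sum>k\<in>I. F 0 k $$ (i, j)) + (\<Sum>k\<in>I. F 1 k $$ (i, j))" by simp
  finally show "msum r c (\<lambda>(s, k). F s k) ({0::nat, 1} \<times> I) $$ (i, j) = (msum r c (F 0) I + msum r c (F 1) I) $$ (i, j)"
    using ij by simp
qed auto

lemma marg_term:
  assumes Y: "Y \<in> carrier_mat dA dA" and K: "K \<in> carrier_mat e dB" and R: "\<rho> \<in> carrier_mat (dA * dB) (dA * dB)"
  shows "ctrace (kron Y (1\<^sub>m e) * (kron (1\<^sub>m dA) K * \<rho> * adj (kron (1\<^sub>m dA) K))) = ctrace (kron Y (adj K * K) * \<rho>)"
proof -
  let ?Kt = "kron (1\<^sub>m dA) K"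
  have Kt: "?Kt \<in> carrier_mat (dA * e) (dA * dB)" using K by simp
  have Yt: "kron Y (1\<^sub>m e) \<in> carrier_mat (dA * e) (dA * e)" using Y by simp
  have "kron Y (1\<^sub>m e) * (?Kt * \<rho> * adj ?Kt) = (kron Y (1\<^sub>m e) * ?Kt * \<rho>) * adj ?Kt"
    using Kt Yt R Y K by (simp add: assm)
  then have "ctrace (kron Y (1\<^sub>m e) * (?Kt * \<rho> * adj ?Kt)) = ctrace ((kron Y (1\<^sub>m e) * ?Kt * \<rho>) * adj ?Kt)" by simp
  also have "\<dots> = ctrace (adj ?Kt * (kron Y (1\<^sub>m e) * ?Kt * \<rho>))"
    by (rule ctrace_mult_comm[of _ "dA * e" "dA * dB"]) (use Kt Yt R in auto)
  also have "adj ?Kt * (kron Y (1\<^sub>m e) * ?Kt * \<rho>) = (adj ?Kt * kron Y (1\<^sub>m e) * ?Kt) * \<rho>"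
    using Kt Yt R Y K by (simp add: assm)
  also have "adj ?Kt * kron Y (1\<^sub>m e) * ?Kt = kron Y (adj K * K)"
    unfolding adj_kron using Y K by (simp add: kmult)
  finally show ?thesis .
qed

lemma marginal:
  fixes \<rho> Y :: "complex mat" and Kf :: "nat \<Rightarrow> nat \<Rightarrow> complex mat"
  assumes R: "\<rho> \<in> carrier_mat (dA * dB) (dA * dB)" and Y: "Y \<in> carrier_mat dA dA"
   and Kc: "\<And>s k. s \<in> {0, 1} \<Longrightarrow> k < nK \<Longrightarrow> Kf s k \<in> carrier_mat e dB"
   and sumK: "msum dB dB (\<lambda>k. adj (Kf 0 k) * Kf 0 k) {..<nK} + msum dB dB (\<lambda>k. adj (Kf 1 k) * Kf 1 k) {..<nK} = 1\<^sub>m dB"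
  shows "ctrace (kron Y (1\<^sub>m e) * (msum (dA * e) (dA * e) (\<lambda>k. kron (1\<^sub>m dA) (Kf 0 k) * \<rho> * adj (kron (1\<^sub>m dA) (Kf 0 k))) {..<nK}
              + msum (dA * e) (dA * e) (\<lambda>k. kron (1\<^sub>m dA) (Kf 1 k) * \<rho> * adj (kron (1\<^sub>m dA) (Kf 1 k))) {..<nK}))
       = ctrace (kron Y (1\<^sub>m dB) * \<rho>)"
proof -
  define Sg where "Sg s = msum (dA * e) (dA * e) (\<lambda>k. kron (1\<^sub>m dA) (Kf s k) * \<rho> * adj (kron (1\<^sub>m dA) (Kf s k))) {..<nK}" for s
  define M where "M s = msum dB dB (\<lambda>k. adj (Kf s k) * Kf s k) {..<nK}" for s
  have Yt: "kron Y (1\<^sub>m e) \<in> carrier_mat (dA * e) (dA * e)" using Y by simp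
  have termc: "kron (1\<^sub>m dA) (Kf s k) * \<rho> * adj (kron (1\<^sub>m dA) (Kf s k)) \<in> carrier_mat (dA * e) (dA * e)"
    if "s \<in> {0,1}" "k < nK" for s k
    using Kc[OF that] R by (auto intro!: mult_carrier_mat[of _ _ "dA * dB"])
  have KK: "adj (Kf s k) * Kf s k \<in> carrier_mat dB dB" if "s \<in> {0,1}" "k < nK" for s k
    using mult_carrier_mat[OF adj_carrier[OF Kc[OF that]] Kc[OF that]] .
  have one: "ctrace (kron Y (1\<^sub>m e) * Sg s) = ctrace (kron Y (M s) * \<rho>)" if s: "s \<in> {0, 1}" for s
  proof -
    have "kron Y (1\<^sub>m e) * Sg s = msum (dA * e) (dA * e) (\<lambda>k. kron Y (1\<^sub>m e) * (kron (1\<^sub>m dA) (Kf s k) * \<rho> * adj (kron (1\<^sub>m dA) (Kf s k)))) {..<nK}"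
      unfolding Sg_def by (rule mult_msum) (use Yt termc s in auto)
    moreover have "ctrace (msum (dA * e) (dA * e) (\<lambda>k. kron Y (1\<^sub>m e) * (kron (1\<^sub>m dA) (Kf s k) * \<rho> * adj (kron (1\<^sub>m dA) (Kf s k)))) {..<nK})
       = (\<Sum>k<nK. ctrace (kron Y (1\<^sub>m e) * (kron (1\<^sub>m dA) (Kf s k) * \<rho> * adj (kron (1\<^sub>m dA) (Kf s k)))))"
      by (rule ctrace_msum) (use Yt termc s in \<open>auto intro!: mult_carrier_mat[of _ _ "dA * e"]\<close>)
    ultimately have "ctrace (kron Y (1\<^sub>m e) * Sg s) = (\<Sum>k<nK. ctrace (kron Y (1\<^sub>m e) * (kron (1\<^sub>m dA) (Kf s k) * \<rho> * adj (kron (1\<^sub>m dA) (Kf s k)))))"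
      by simp
    also have "\<dots> = (\<Sum>k<nK. ctrace (kron Y (adj (Kf s k) * Kf s k) * \<rho>))"
      by (rule sum.cong) (use marg_term[OF Y Kc[OF s] R] in auto)
    also have "\<dots> = ctrace (msum (dA * dB) (dA * dB) (\<lambda>k. kron Y (adj (Kf s k) * Kf s k) * \<rho>) {..<nK})"
      by (rule ctrace_msum[symmetric]) (use Y KK[OF s] R in \<open>auto intro!: mult_carrier_mat[of _ _ "dA * dB"]\<close>)
    also have "msum (dA * dB) (dA * dB) (\<lambda>k. kron Y (adj (Kf s k) * Kf s k) * \<rho>) {..<nK}
       = msum (dA * dB) (dA * dB) (\<lambda>k. kron Y (adj (Kf s k) * Kf s k)) {..<nK} * \<rho>"
      by (rule msum_mult[symmetric]) (use Y KK[OF s] R in auto)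
    also have "msum (dA * dB) (dA * dB) (\<lambda>k. kron Y (adj (Kf s k) * Kf s k)) {..<nK} = kron Y (M s)"
      unfolding M_def by (rule kron_msum_right[symmetric]) (use Y KK[OF s] in auto)
    finally show ?thesis .
  qed
  have "kron Y (1\<^sub>m e) * (Sg 0 + Sg 1) = kron Y (1\<^sub>m e) * Sg 0 + kron Y (1\<^sub>m e) * Sg 1"
    unfolding Sg_def using Yt Y by (simp add: maddm)
  then have "ctrace (kron Y (1\<^sub>m e) * (Sg 0 + Sg 1)) = ctrace (kron Y (M 0) * \<rho>) + ctrace (kron Y (M 1) * \<rho>)"
    using one[of 0] one[of 1] Yt Y unfolding Sg_def by (simp add: ctrace_add')
  also have "\<dots> = ctrace ((kron Y (M 0) + kron Y (M 1)) * \<rho>)"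
    unfolding M_def using Y R by (simp add: addm ctrace_add')
  also have "kron Y (M 0) + kron Y (M 1) = kron Y (1\<^sub>m dB)"
    using sumK unfolding M_def by (simp add: kaddr[symmetric])
  finally show ?thesis unfolding Sg_def .
qed

lemma kron_left_obs:
  assumes Ob: "Ob \<in> carrier_mat a a" "adj Ob = Ob" "psd a (1\<^sub>m a - Ob * Ob)"
  shows "kron Ob (1\<^sub>m b) \<in> carrier_mat (a * b) (a * b)" "adj (kron Ob (1\<^sub>m b)) = kron Ob (1\<^sub>m b)"
    "psd (a * b) (1\<^sub>m (a * b) - kron Ob (1\<^sub>m b) * kron Ob (1\<^sub>m b))"
proof -
  show "kron Ob (1\<^sub>m b) \<in> carrier_mat (a * b) (a * b)" using Ob by simp
  show "adj (kron Ob (1\<^sub>m b)) = kron Ob (1\<^sub>m b)" unfolding adj_kron using Ob by simp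
  have "1\<^sub>m (a * b) - kron Ob (1\<^sub>m b) * kron Ob (1\<^sub>m b) = kron (1\<^sub>m a - Ob * Ob) (1\<^sub>m b)"
    using Ob by (simp add: kmult kron_one[symmetric] ksubl)
  then show "psd (a * b) (1\<^sub>m (a * b) - kron Ob (1\<^sub>m b) * kron Ob (1\<^sub>m b))"
    using psd_kron[OF Ob(3) psd_one[of b]] by simp
qed

lemma kron_right_obs:
  assumes Ob: "Ob \<in> carrier_mat b b" "adj Ob = Ob" "psd b (1\<^sub>m b - Ob * Ob)"
  shows "kron (1\<^sub>m a) Ob \<in> carrier_mat (a * b) (a * b)" "adj (kron (1\<^sub>m a) Ob) = kron (1\<^sub>m a) Ob"
    "psd (a * b) (1\<^sub>m (a * b) - kron (1\<^sub>m a) Ob * kron (1\<^sub>m a) Ob)"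
proof -
  show "kron (1\<^sub>m a) Ob \<in> carrier_mat (a * b) (a * b)" using Ob by simp
  show "adj (kron (1\<^sub>m a) Ob) = kron (1\<^sub>m a) Ob" unfolding adj_kron using Ob by simp
  have "1\<^sub>m (a * b) - kron (1\<^sub>m a) Ob * kron (1\<^sub>m a) Ob = kron (1\<^sub>m a) (1\<^sub>m b - Ob * Ob)"
    using Ob by (simp add: kmult kron_one[symmetric] ksubr)
  then show "psd (a * b) (1\<^sub>m (a * b) - kron (1\<^sub>m a) Ob * kron (1\<^sub>m a) Ob)"
    using psd_kron[OF psd_one[of a] Ob(3)] by simp
qed

lemma pk_lemma:
  assumes "OP \<in> carrier_mat p p" "OQ \<in> carrier_mat q q"
  shows "(1\<^sub>m (a * (p * q)) - kron (1\<^sub>m a) (kron OP (1\<^sub>m q)) * kron (1\<^sub>m a) (kron OP (1\<^sub>m q))) *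
         (1\<^sub>m (a * (p * q)) - kron (1\<^sub>m a) (kron (1\<^sub>m p) OQ) * kron (1\<^sub>m a) (kron (1\<^sub>m p) OQ))
       = kron (1\<^sub>m a) (kron (1\<^sub>m p - OP * OP) (1\<^sub>m q - OQ * OQ))"
proof -
  have e1: "1\<^sub>m (a * (p * q)) - kron (1\<^sub>m a) (kron OP (1\<^sub>m q)) * kron (1\<^sub>m a) (kron OP (1\<^sub>m q))
     = kron (1\<^sub>m a) (kron (1\<^sub>m p - OP * OP) (1\<^sub>m q))"
    using assms by (simp add: kmult kron_one[symmetric] ksubr ksubl)
  have e2: "1\<^sub>m (a * (p * q)) - kron (1\<^sub>m a) (kron (1\<^sub>m p) OQ) * kron (1\<^sub>m a) (kron (1\<^sub>m p) OQ)
     = kron (1\<^sub>m a) (kron (1\<^sub>m p) (1\<^sub>m q - OQ * OQ))"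
    using assms by (simp add: kmult kron_one[symmetric] ksubr)
  show ?thesis unfolding e1 e2 using assms by (simp add: kmult)
qed

lemma sum01: "(\<Sum>x\<in>{0::nat, 1}. f x) = f 0 + f 1" by simp

lemma win_bound:
  assumes cs: "clone_strategy dA dB dP dQ nK \<rho> A K P Q" and g0: "0 \<le> \<gamma>" and g1: "\<gamma> \<le> 1"
  shows "clone_win_prob \<gamma> \<alpha> dA dB dP dQ nK \<rho> A K P Q
     \<le> (1 - \<gamma>) + \<gamma> * chsh_value - min \<gamma> ((1 - \<gamma>) * (1 - \<alpha>)^2) / 136"
proof -
  note csd = cs[unfolded clone_strategy_def]
  have pos: "dA > 0" "dB > 0" "dP > 0" "dQ > 0" using csd by auto
  have rho: "psd (dA * dB) \<rho>" "ctrace \<rho> = 1" using csd unfolding density_def by auto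
  have pA: "psd dA (A x 0)" "psd dA (A x 1)" "A x 0 + A x 1 = 1\<^sub>m dA" if "x \<in> {0,1}" for x
    using csd that unfolding povm2_def by auto
  have pP: "psd dP (P x 0)" "psd dP (P x 1)" "P x 0 + P x 1 = 1\<^sub>m dP" if "x \<in> {0,1}" for x
    using csd that unfolding povm2_def by auto
  have pQ: "psd dQ (Q x 0)" "psd dQ (Q x 1)" "Q x 0 + Q x 1 = 1\<^sub>m dQ" if "x \<in> {0,1}" for x
    using csd that unfolding povm2_def by auto
  have Kc: "K u s k \<in> carrier_mat (dP * dQ) dB" if "u \<in> {Some 0, Some 1, None}" "s \<in> {0,1}" "k < nK" for u s k
    using csd that by blast
  have Ksum: "msum dB dB (\<lambda>(s, k). adj (K u s k) * K u s k) ({0::nat, 1} \<times> {..<nK}) = 1\<^sub>m dB"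
    if "u \<in> {Some 0, Some 1, None}" for u
    using csd that by blast
  define M where "M u s = msum dB dB (\<lambda>k. adj (K u s k) * K u s k) {..<nK}" for u s
  have Msum: "M u 0 + M u 1 = 1\<^sub>m dB" if "u \<in> {Some 0, Some 1, None}" for u
    using Ksum[OF that] msum_pair[of "{..<nK}" dB dB "\<lambda>s k. adj (K u s k) * K u s k"] unfolding M_def by simp
  have Mpsd: "psd dB (M u s)" if "u \<in> {Some 0, Some 1, None}" "s \<in> {0,1}" for u s
    unfolding M_def
  proof (rule psd_msum)
    fix k assume "k \<in> {..<nK}"
    then have "K u s k \<in> carrier_mat (dP * dQ) dB" using Kc that by auto
    then show "psd dB (adj (K u s k) * K u s k)" using psd_gramI[of "adj (K u s k)" dB "dP * dQ"] by simp
  qed simp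
  define OA where "OA x = A x 0 - A x 1" for x
  define OP where "OP x = P x 0 - P x 1" for x
  define OQ where "OQ x = Q x 0 - Q x 1" for x
  define OB where "OB u = M (Some u) 0 - M (Some u) 1" for u
  have oA: "OA x \<in> carrier_mat dA dA" "adj (OA x) = OA x" "psd dA (1\<^sub>m dA - OA x * OA x)" if "x \<in> {0,1}" for x
    using obs_props[OF pA[OF that]] unfolding OA_def by auto
  have oP: "OP x \<in> carrier_mat dP dP" "adj (OP x) = OP x" "psd dP (1\<^sub>m dP - OP x * OP x)" if "x \<in> {0,1}" for x
    using obs_props[OF pP[OF that]] unfolding OP_def by auto
  have oQ: "OQ x \<in> carrier_mat dQ dQ" "adj (OQ x) = OQ x" "psd dQ (1\<^sub>m dQ - OQ x * OQ x)" if "x \<in> {0,1}" for x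
    using obs_props[OF pQ[OF that]] unfolding OQ_def by auto
  have oB: "OB u \<in> carrier_mat dB dB" "adj (OB u) = OB u" "psd dB (1\<^sub>m dB - OB u * OB u)" if "u \<in> {0,1}" for u
  proof -
    have u: "Some u \<in> {Some 0, Some 1, None}" using that by auto
    show "OB u \<in> carrier_mat dB dB" "adj (OB u) = OB u" "psd dB (1\<^sub>m dB - OB u * OB u)"
      using obs_props[OF Mpsd[OF u] Mpsd[OF u] Msum[OF u]] unfolding OB_def by auto
  qed
  have dr: "dim_row \<rho> = dA * dB" using psd_carrier[OF rho(1)] by auto
  have S: "st \<rho>" using rho(1) dr by simp
  define Ah where "Ah x = kron (OA x) (1\<^sub>m dB)" for x
  define Bh where "Bh u = kron (1\<^sub>m dA) (OB u)" for u
  have hA: "sq \<rho> (Ah x)" "adj (Ah x) = Ah x" "psd (dim_row \<rho>) (1\<^sub>m (dim_row \<rho>) - Ah x * Ah x)" if "x \<in> {0,1}" for x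
    using kron_left_obs[OF oA[OF that], of dB] unfolding Ah_def dr by auto
  have hB: "sq \<rho> (Bh u)" "adj (Bh u) = Bh u" "psd (dim_row \<rho>) (1\<^sub>m (dim_row \<rho>) - Bh u * Bh u)" if "u \<in> {0,1}" for u
    using kron_right_obs[OF oB[OF that], of dA] unfolding Bh_def dr by auto
  have cAB: "Bh u * Ah x = Ah x * Bh u" "Ah x * Bh u = kron (OA x) (OB u)" if "x \<in> {0,1}" "u \<in> {0,1}" for x u
    using kron_1_mult[OF oA(1)[OF that(1)] oB(1)[OF that(2)]] unfolding Ah_def Bh_def by auto
  have ipE: "ip \<rho> (Ah x) (Bh u) = Ev \<rho> (kron (OA x) (OB u))" if "x \<in> {0,1}" "u \<in> {0,1}" for x u
    unfolding ip_def using hA(2)[OF that(1)] cAB(2)[OF that] by simp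
  define cc where "cc = ip \<rho> (Ah 0) (Bh 0) + ip \<rho> (Ah 0) (Bh 1) + ip \<rho> (Ah 1) (Bh 0) - ip \<rho> (Ah 1) (Bh 1)"
  have CH: "cc \<le> 2 * sqrt 2" "nm \<rho> (Ah 0 * Ah 1 + Ah 1 * Ah 0) \<le> 34 * (2 * sqrt 2 - cc)"
    unfolding cc_def
    using chsh_bound[OF S rho(2) hA(1)[of 0] hA(1)[of 1] hB(1)[of 0] hB(1)[of 1]
        hA(2)[of 0] hA(2)[of 1] hB(2)[of 0] hB(2)[of 1] hA(3)[of 0] hA(3)[of 1] hB(3)[of 0] hB(3)[of 1]
        cAB(1)[of 0 0] cAB(1)[of 0 1] cAB(1)[of 1 0] cAB(1)[of 1 1]] by auto
  define r1 where "r1 x u = (\<Sum>a\<in>{0::nat,1}. \<Sum>s\<in>{0::nat,1}.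
       if (a + s) mod 2 = x * u then round1_prob dA dB nK \<rho> A K x a (Some u) s else 0)" for x u
  have rp: "round1_prob dA dB nK \<rho> A K x a (Some u) s = Ev \<rho> (kron (A x a) (M (Some u) s))" for x a u s
    unfolding round1_prob_def Ev_def M_def ..
  have bip: "Ev \<rho> (kron (A x 0) (M (Some u) 0)) + Ev \<rho> (kron (A x 1) (M (Some u) 1)) = (1 + Ev \<rho> (kron (OA x) (OB u))) / 2"
     "Ev \<rho> (kron (A x 0) (M (Some u) 1)) + Ev \<rho> (kron (A x 1) (M (Some u) 0)) = (1 - Ev \<rho> (kron (OA x) (OB u))) / 2"
    if "x \<in> {0,1}" "u \<in> {0,1}" for x u
  proof -
    have u: "Some u \<in> {Some 0, Some 1, None}" using that by auto
    have c: "A x 0 \<in> carrier_mat dA dA" "A x 1 \<in> carrier_mat dA dA" "M (Some u) 0 \<in> carrier_mat dB dB" "M (Some u) 1 \<in> carrier_mat dB dB"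
      using pA[OF that(1)] Mpsd[OF u] psd_carrier by auto
    show "Ev \<rho> (kron (A x 0) (M (Some u) 0)) + Ev \<rho> (kron (A x 1) (M (Some u) 1)) = (1 + Ev \<rho> (kron (OA x) (OB u))) / 2"
      "Ev \<rho> (kron (A x 0) (M (Some u) 1)) + Ev \<rho> (kron (A x 1) (M (Some u) 0)) = (1 - Ev \<rho> (kron (OA x) (OB u))) / 2"
      using bip_expand[OF S rho(2) dr c pA(3)[OF that(1)] Msum[OF u]] unfolding OA_def OB_def by auto
  qed
  have r1v: "r1 0 0 = (1 + ip \<rho> (Ah 0) (Bh 0)) / 2" "r1 0 1 = (1 + ip \<rho> (Ah 0) (Bh 1)) / 2"
    "r1 1 0 = (1 + ip \<rho> (Ah 1) (Bh 0)) / 2" "r1 1 1 = (1 - ip \<rho> (Ah 1) (Bh 1)) / 2"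
    unfolding r1_def rp using bip ipE by auto
  \<comment> \<open>the state after Barlie's channel in the keep case\<close>
  define e where "e = dP * dQ"
  define Kf where "Kf s k = K None s k" for s k
  define Sg where "Sg s = msum (dA * e) (dA * e) (\<lambda>k. kron (1\<^sub>m dA) (Kf s k) * \<rho> * adj (kron (1\<^sub>m dA) (Kf s k))) {..<nK}" for s
  define \<sigma> where "\<sigma> = Sg 0 + Sg 1"
  have KfC: "Kf s k \<in> carrier_mat e dB" if "s \<in> {0,1}" "k < nK" for s k
    unfolding Kf_def e_def using Kc[of None s k] that by auto
  have KfS: "msum dB dB (\<lambda>k. adj (Kf 0 k) * Kf 0 k) {..<nK} + msum dB dB (\<lambda>k. adj (Kf 1 k) * Kf 1 k) {..<nK} = 1\<^sub>m dB"
    using Msum[of None] unfolding M_def Kf_def by simp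
  have Rc: "\<rho> \<in> carrier_mat (dA * dB) (dA * dB)" using psd_carrier[OF rho(1)] .
  have marg: "ctrace (kron Y (1\<^sub>m e) * \<sigma>) = ctrace (kron Y (1\<^sub>m dB) * \<rho>)" if "Y \<in> carrier_mat dA dA" for Y
    unfolding \<sigma>_def Sg_def by (rule marginal[OF Rc that KfC KfS])
  have Sgpsd: "psd (dA * e) (Sg s)" if "s \<in> {0,1}" for s
    unfolding Sg_def
  proof (rule psd_msum)
    fix k assume "k \<in> {..<nK}"
    then have "kron (1\<^sub>m dA) (Kf s k) \<in> carrier_mat (dA * e) (dA * dB)" using KfC that by auto
    then show "psd (dA * e) (kron (1\<^sub>m dA) (Kf s k) * \<rho> * adj (kron (1\<^sub>m dA) (Kf s k)))"
      by (rule psd_conj[OF rho(1)])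
  qed simp
  have spsd: "psd (dA * e) \<sigma>" unfolding \<sigma>_def using psd_add Sgpsd by auto
  have sdr: "dim_row \<sigma> = dA * e" using psd_carrier[OF spsd] by auto
  have S2: "st \<sigma>" using spsd sdr by simp
  have str: "ctrace \<sigma> = 1"
  proof -
    have "ctrace (kron (1\<^sub>m dA) (1\<^sub>m e) * \<sigma>) = ctrace (kron (1\<^sub>m dA) (1\<^sub>m dB) * \<rho>)" by (rule marg) simp
    then show ?thesis using rho(2) Rc psd_carrier[OF spsd] by (simp add: kron_one)
  qed
  define Ac where "Ac x = kron (OA x) (1\<^sub>m e)" for x
  define Pc where "Pc x = kron (1\<^sub>m dA) (kron (OP x) (1\<^sub>m dQ))" for x
  define Qc where "Qc x = kron (1\<^sub>m dA) (kron (1\<^sub>m dP) (OQ x))" for x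
  have hAc: "sq \<sigma> (Ac x)" "adj (Ac x) = Ac x" "psd (dim_row \<sigma>) (1\<^sub>m (dim_row \<sigma>) - Ac x * Ac x)" if "x \<in> {0,1}" for x
    using kron_left_obs[OF oA[OF that], of e] unfolding Ac_def sdr by auto
  have hP1: "kron (OP x) (1\<^sub>m dQ) \<in> carrier_mat e e" "adj (kron (OP x) (1\<^sub>m dQ)) = kron (OP x) (1\<^sub>m dQ)"
     "psd e (1\<^sub>m e - kron (OP x) (1\<^sub>m dQ) * kron (OP x) (1\<^sub>m dQ))" if "x \<in> {0,1}" for x
    using kron_left_obs[OF oP[OF that], of dQ] unfolding e_def by auto
  have hQ1: "kron (1\<^sub>m dP) (OQ x) \<in> carrier_mat e e" "adj (kron (1\<^sub>m dP) (OQ x)) = kron (1\<^sub>m dP) (OQ x)"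
     "psd e (1\<^sub>m e - kron (1\<^sub>m dP) (OQ x) * kron (1\<^sub>m dP) (OQ x))" if "x \<in> {0,1}" for x
    using kron_right_obs[OF oQ[OF that], of dP] unfolding e_def by auto
  have hPc: "sq \<sigma> (Pc x)" "adj (Pc x) = Pc x" "psd (dim_row \<sigma>) (1\<^sub>m (dim_row \<sigma>) - Pc x * Pc x)" if "x \<in> {0,1}" for x
    using kron_right_obs[OF hP1[OF that], of dA] unfolding Pc_def sdr by auto
  have hQc: "sq \<sigma> (Qc x)" "adj (Qc x) = Qc x" "psd (dim_row \<sigma>) (1\<^sub>m (dim_row \<sigma>) - Qc x * Qc x)" if "x \<in> {0,1}" for x
    using kron_right_obs[OF hQ1[OF that], of dA] unfolding Qc_def sdr by auto
  have cAP: "Pc y * Ac x = Ac x * Pc y" "Ac x * Pc y = kron (OA x) (kron (OP y) (1\<^sub>m dQ))" if "x \<in> {0,1}" "y \<in> {0,1}" for x y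
    using kron_1_mult[OF oA(1)[OF that(1)] hP1(1)[OF that(2)]] unfolding Ac_def Pc_def by auto
  have cAQ: "Qc y * Ac x = Ac x * Qc y" "Ac x * Qc y = kron (OA x) (kron (1\<^sub>m dP) (OQ y))" if "x \<in> {0,1}" "y \<in> {0,1}" for x y
    using kron_1_mult[OF oA(1)[OF that(1)] hQ1(1)[OF that(2)]] unfolding Ac_def Qc_def by auto
  have cPQ: "Qc y * Pc x = Pc x * Qc y" "Pc x * Qc y = kron (1\<^sub>m dA) (kron (OP x) (OQ y))" if "x \<in> {0,1}" "y \<in> {0,1}" for x y
  proof -
    have a: "kron (OP x) (1\<^sub>m dQ) * kron (1\<^sub>m dP) (OQ y) = kron (OP x) (OQ y)"
        "kron (1\<^sub>m dP) (OQ y) * kron (OP x) (1\<^sub>m dQ) = kron (OP x) (OQ y)"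
      using kron_1_mult[OF oP(1)[OF that(1)] oQ(1)[OF that(2)]] by auto
    have b: "Pc x * Qc y = kron (1\<^sub>m dA) (kron (OP x) (OQ y))"
      unfolding Pc_def Qc_def using oP(1)[OF that(1)] oQ(1)[OF that(2)] a by (simp add: kmult)
    have c: "Qc y * Pc x = kron (1\<^sub>m dA) (kron (OP x) (OQ y))"
      unfolding Pc_def Qc_def using oP(1)[OF that(1)] oQ(1)[OF that(2)] a by (simp add: kmult)
    show "Qc y * Pc x = Pc x * Qc y" "Pc x * Qc y = kron (1\<^sub>m dA) (kron (OP x) (OQ y))" using b c by auto
  qed
  have pk: "psd (dim_row \<sigma>) ((1\<^sub>m (dim_row \<sigma>) - Pc 0 * Pc 0) * (1\<^sub>m (dim_row \<sigma>) - Qc 1 * Qc 1))"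
  proof -
    have "psd (dA * (dP * dQ)) (kron (1\<^sub>m dA) (kron (1\<^sub>m dP - OP 0 * OP 0) (1\<^sub>m dQ - OQ 1 * OQ 1)))"
      using psd_kron[OF psd_one psd_kron[OF oP(3)[of 0] oQ(3)[of 1]]] by simp
    then show ?thesis unfolding sdr e_def Pc_def Qc_def using pk_lemma[OF oP(1)[of 0] oQ(1)[of 1], of dA] by simp
  qed
  have KB: "nm \<sigma> (Ac 0 * Ac 1 + Ac 1 * Ac 0) \<ge> 2 - 20 * ((1 - ip \<sigma> (Ac 0) (Pc 0)) + (1 - ip \<sigma> (Ac 1) (Qc 1)))"
    by (rule keep_bound[OF S2 str hAc(1)[of 0] hAc(1)[of 1] hPc(1)[of 0] hQc(1)[of 1]
        hAc(2)[of 0] hAc(2)[of 1] hPc(2)[of 0] hQc(2)[of 1] hAc(3)[of 0] hAc(3)[of 1] hPc(3)[of 0] hQc(3)[of 1]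
        cAQ(1)[of 0 1] cAP(1)[of 1 0] cPQ(1)[of 0 1] pk]) auto
  \<comment> \<open>the anticommutator has the same norm in both states\<close>
  define ZA where "ZA = OA 0 * OA 1 + OA 1 * OA 0"
  have ZAc: "ZA \<in> carrier_mat dA dA" unfolding ZA_def using oA(1)[of 0] oA(1)[of 1] by auto
  have ZZc: "adj ZA * ZA \<in> carrier_mat dA dA" using ZAc by auto
  have zr: "Ah 0 * Ah 1 + Ah 1 * Ah 0 = kron ZA (1\<^sub>m dB)"
    unfolding Ah_def ZA_def using oA(1)[of 0] oA(1)[of 1] by (simp add: kmult kaddl)
  have zs: "Ac 0 * Ac 1 + Ac 1 * Ac 0 = kron ZA (1\<^sub>m e)"
    unfolding Ac_def ZA_def using oA(1)[of 0] oA(1)[of 1] by (simp add: kmult kaddl)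
  have nmeq: "nm \<sigma> (Ac 0 * Ac 1 + Ac 1 * Ac 0) = nm \<rho> (Ah 0 * Ah 1 + Ah 1 * Ah 0)"
  proof -
    have "nm \<sigma> (kron ZA (1\<^sub>m e)) = Re (ctrace (kron (adj ZA * ZA) (1\<^sub>m e) * \<sigma>))"
      unfolding nm_def ip_def Ev_def adj_kron using ZAc by (simp add: kmult)
    also have "\<dots> = Re (ctrace (kron (adj ZA * ZA) (1\<^sub>m dB) * \<rho>))" using marg[OF ZZc] by simp
    also have "\<dots> = nm \<rho> (kron ZA (1\<^sub>m dB))"
      unfolding nm_def ip_def Ev_def adj_kron using ZAc by (simp add: kmult)
    finally show ?thesis unfolding zr zs .
  qed
  define kp where "kp x = (\<Sum>a\<in>{0::nat,1}. \<Sum>s\<in>{0::nat,1}. keep_prob dA dP dQ nK \<rho> A K P Q x a s)" for x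
  have kps: "(\<Sum>s\<in>{0::nat,1}. keep_prob dA dP dQ nK \<rho> A K P Q x a s) = Ev \<sigma> (kron (A x a) (kron (P x a) (Q x a)))"
    if "x \<in> {0,1}" "a \<in> {0,1}" for x a
  proof -
    define Mx where "Mx = kron (A x a) (kron (P x a) (Q x a))"
    have Mxc: "Mx \<in> carrier_mat (dA * e) (dA * e)" unfolding Mx_def e_def
      using pA[OF that(1)] pP[OF that(1)] pQ[OF that(1)] that psd_carrier by (auto intro!: kron_carrier)
    have "keep_prob dA dP dQ nK \<rho> A K P Q x a s = Re (ctrace (Mx * Sg s))" for s
      unfolding keep_prob_def Mx_def Sg_def Kf_def e_def ..
    then have "(\<Sum>s\<in>{0::nat,1}. keep_prob dA dP dQ nK \<rho> A K P Q x a s) = Re (ctrace (Mx * Sg 0)) + Re (ctrace (Mx * Sg 1))"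
      by simp
    also have "\<dots> = Re (ctrace (Mx * \<sigma>))"
    proof -
      have s0: "Sg 0 \<in> carrier_mat (dA * e) (dA * e)" using psd_carrier[OF Sgpsd[of 0]] by simp
      have s1: "Sg 1 \<in> carrier_mat (dA * e) (dA * e)" using psd_carrier[OF Sgpsd[of 1]] by simp
      have "Mx * (Sg 0 + Sg 1) = Mx * Sg 0 + Mx * Sg 1" using Mxc s0 s1 by (simp add: maddm)
      then show ?thesis unfolding \<sigma>_def using Mxc s0 s1 by (simp add: ctrace_add')
    qed
    finally show ?thesis unfolding Ev_def Mx_def .
  qed
  have kpv: "kp x = (1 + ip \<sigma> (Ac x) (Pc x) + ip \<sigma> (Ac x) (Qc x) + ip \<sigma> (Pc x) (Qc x)) / 4" if x: "x \<in> {0,1}" for x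
  proof -
    have c: "A x 0 \<in> carrier_mat dA dA" "A x 1 \<in> carrier_mat dA dA" "P x 0 \<in> carrier_mat dP dP" "P x 1 \<in> carrier_mat dP dP"
          "Q x 0 \<in> carrier_mat dQ dQ" "Q x 1 \<in> carrier_mat dQ dQ"
      using pA[OF x] pP[OF x] pQ[OF x] psd_carrier by auto
    have "kp x = Ev \<sigma> (kron (A x 0) (kron (P x 0) (Q x 0))) + Ev \<sigma> (kron (A x 1) (kron (P x 1) (Q x 1)))"
      unfolding kp_def using kps[OF x] by simp
    also have "\<dots> = (1 + Ev \<sigma> (kron (OA x) (kron (OP x) (1\<^sub>m dQ))) + Ev \<sigma> (kron (OA x) (kron (1\<^sub>m dP) (OQ x)))
        + Ev \<sigma> (kron (1\<^sub>m dA) (kron (OP x) (OQ x)))) / 4"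
      using trip_expand[OF S2 str _ c pA(3)[OF x] pP(3)[OF x] pQ(3)[OF x]] sdr pA(3)[OF x] pP(3)[OF x] pQ(3)[OF x]
      unfolding e_def OA_def OP_def OQ_def by simp
    also have "\<dots> = (1 + ip \<sigma> (Ac x) (Pc x) + ip \<sigma> (Ac x) (Qc x) + ip \<sigma> (Pc x) (Qc x)) / 4"
      unfolding ip_def using hAc(2)[OF x] hPc(2)[OF x] cAP(2)[OF x x] cAQ(2)[OF x x] cPQ(2)[OF x x] by simp
    finally show ?thesis .
  qed
  have sl: "ip \<sigma> (Ac x) (Pc x) \<le> 1" "ip \<sigma> (Ac x) (Qc x) \<le> 1" "ip \<sigma> (Pc x) (Qc x) \<le> 1" if x: "x \<in> {0,1}" for x
    using ip_le_1[OF S2 str hAc(1)[OF x] hPc(1)[OF x] hAc(2)[OF x] hPc(2)[OF x] hAc(3)[OF x] hPc(3)[OF x]]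
      ip_le_1[OF S2 str hAc(1)[OF x] hQc(1)[OF x] hAc(2)[OF x] hQc(2)[OF x] hAc(3)[OF x] hQc(3)[OF x]]
      ip_le_1[OF S2 str hPc(1)[OF x] hQc(1)[OF x] hPc(2)[OF x] hQc(2)[OF x] hPc(3)[OF x] hQc(3)[OF x]] by auto
  define \<beta> where "\<beta> = (1 - \<alpha>)^2"
  define e1 where "e1 = 2 * sqrt 2 - cc"
  define e2 where "e2 = (3 - ip \<sigma> (Ac 0) (Pc 0) - ip \<sigma> (Ac 0) (Qc 0) - ip \<sigma> (Pc 0) (Qc 0))
                      + (3 - ip \<sigma> (Ac 1) (Pc 1) - ip \<sigma> (Ac 1) (Qc 1) - ip \<sigma> (Pc 1) (Qc 1))"
  have e1p: "e1 \<ge> 0" unfolding e1_def using CH(1) by simp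
  have e2p: "e2 \<ge> 0" unfolding e2_def using sl[of 0] sl[of 1] by auto
  have sum12: "34 * e1 + 20 * e2 \<ge> 2"
  proof -
    have "(1 - ip \<sigma> (Ac 0) (Pc 0)) + (1 - ip \<sigma> (Ac 1) (Qc 1)) \<le> e2" unfolding e2_def using sl[of 0] sl[of 1] by auto
    then show ?thesis using KB nmeq CH(2) unfolding e1_def by (smt (verit))
  qed
  have bp: "\<beta> \<ge> 0" unfolding \<beta>_def by simp
  have W: "clone_win_prob \<gamma> \<alpha> dA dB dP dQ nK \<rho> A K P Q =
      (1/2) * ((\<gamma>/2) * (r1 0 0 + r1 0 1) + (1 - \<gamma>) * ((1 - \<beta>) + \<beta> * kp 0))
    + (1/2) * ((\<gamma>/2) * (r1 1 0 + r1 1 1) + (1 - \<gamma>) * ((1 - \<beta>) + \<beta> * kp 1))"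
    unfolding clone_win_prob_def r1_def kp_def \<beta>_def by (simp add: algebra_simps)
  have ch: "\<gamma> * chsh_value = \<gamma> / 2 + \<gamma> * (2 * sqrt 2) / 8"
  proof -
    have "1 / sqrt 2 = sqrt 2 / (2::real)" by (simp add: field_simps)
    then show ?thesis unfolding chsh_value_def by (simp add: field_simps)
  qed
  have W2: "clone_win_prob \<gamma> \<alpha> dA dB dP dQ nK \<rho> A K P Q = (1 - \<gamma>) + \<gamma> * chsh_value - \<gamma> * e1 / 8 - (1 - \<gamma>) * \<beta> * e2 / 8"
  proof -
    have k0: "kp 0 = (1 + ip \<sigma> (Ac 0) (Pc 0) + ip \<sigma> (Ac 0) (Qc 0) + ip \<sigma> (Pc 0) (Qc 0)) / 4" using kpv[of 0] by simp
    have k1: "kp 1 = (1 + ip \<sigma> (Ac 1) (Pc 1) + ip \<sigma> (Ac 1) (Qc 1) + ip \<sigma> (Pc 1) (Qc 1)) / 4" using kpv[of 1] by simp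
    show ?thesis unfolding W r1v k0 k1 ch e1_def e2_def cc_def by (simp add: field_simps)
  qed
  define m where "m = min \<gamma> ((1 - \<gamma>) * \<beta>)"
  have m0: "m \<ge> 0" unfolding m_def using g0 g1 bp by simp
  have "m * e1 \<le> \<gamma> * e1" unfolding m_def using e1p by (intro mult_right_mono) auto
  moreover have "m * e2 \<le> (1 - \<gamma>) * \<beta> * e2" unfolding m_def using e2p by (intro mult_right_mono) auto
  moreover have "m * (1/17) \<le> m * (e1 + e2)" using sum12 e1p e2p m0 by (intro mult_left_mono) auto
  ultimately have "m / 17 \<le> \<gamma> * e1 + (1 - \<gamma>) * \<beta> * e2" by (simp add: algebra_simps)
  then show ?thesis unfolding W2 m_def \<beta>_def by simp
qed

lemma trivial_strategy:
  "clone_strategy 1 1 1 1 1 (1\<^sub>m 1) (\<lambda>x a. if a = 0 then 1\<^sub>m 1 else 0\<^sub>m 1 1)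
     (\<lambda>u s k. if s = 0 then 1\<^sub>m 1 else 0\<^sub>m 1 1)
     (\<lambda>x a. if a = 0 then 1\<^sub>m 1 else 0\<^sub>m 1 1) (\<lambda>x a. if a = 0 then 1\<^sub>m 1 else 0\<^sub>m 1 1)"
proof -
  have p1: "psd 1 (1\<^sub>m 1)" by (rule psd_one)
  have p0: "psd 1 (0\<^sub>m 1 1)"
  proof -
    have "0\<^sub>m 1 1 * adj (0\<^sub>m 1 1) = (0\<^sub>m 1 1 :: complex mat)" by (intro eq_matI) (auto simp: scalar_prod_def)
    then show ?thesis using psd_gramI[of "0\<^sub>m 1 1" 1 1] by simp
  qed
  have s10: "1\<^sub>m 1 + 0\<^sub>m 1 1 = (1\<^sub>m 1 :: complex mat)" by (intro eq_matI) auto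
  have pv: "povm2 1 (\<lambda>a. if a = 0 then 1\<^sub>m 1 else 0\<^sub>m 1 1)" unfolding povm2_def using p1 p0 s10 by simp
  have tr: "ctrace (1\<^sub>m 1) = 1" unfolding ctrace_def by simp
  have ms: "msum 1 1 (\<lambda>(s, k). adj (if s = 0 then 1\<^sub>m 1 else 0\<^sub>m 1 1) * (if s = 0 then 1\<^sub>m 1 else 0\<^sub>m 1 1))
        ({0::nat, 1} \<times> {..<1::nat}) = (1\<^sub>m 1 :: complex mat)"
  proof -
    have "msum 1 1 (\<lambda>(s, k). adj (if s = 0 then 1\<^sub>m 1 else 0\<^sub>m 1 1) * (if s = 0 then 1\<^sub>m 1 else 0\<^sub>m 1 1))
        ({0::nat, 1} \<times> {..<1::nat}) = msum 1 1 (\<lambda>k. adj (1\<^sub>m 1) * 1\<^sub>m 1) {..<1::nat} + msum 1 1 (\<lambda>k. adj (0\<^sub>m 1 1) * (0\<^sub>m 1 1 :: complex mat)) {..<1::nat}"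
      using msum_pair[of "{..<1::nat}" 1 1 "\<lambda>s k. adj (if s = 0 then 1\<^sub>m 1 else 0\<^sub>m 1 1) * (if s = 0 then 1\<^sub>m 1 else (0\<^sub>m 1 1 :: complex mat))"]
      by simp
    also have "\<dots> = 1\<^sub>m 1" by (intro eq_matI) (auto simp: scalar_prod_def)
    finally show ?thesis .
  qed
  show ?thesis unfolding clone_strategy_def density_def using p1 tr pv ms by auto
qed

theorem theorem18:
  fixes \<gamma> \<alpha> :: real
  assumes "0 < \<gamma>" "\<gamma> < 1" "0 < \<alpha>" "\<alpha> < 1"
  shows "\<exists>\<delta> > 0. clone_value \<gamma> \<alpha> \<le> (1 - \<gamma>) + \<gamma> * chsh_value - \<delta>"
proof -
  define \<delta> where "\<delta> = min \<gamma> ((1 - \<gamma>) * (1 - \<alpha>)^2) / 136"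
  have d0: "\<delta> > 0" unfolding \<delta>_def using assms by simp
  define SS where "SS = {clone_win_prob \<gamma> \<alpha> dA dB dP dQ nK \<rho> A K P Q | dA dB dP dQ nK \<rho> A K P Q.
        clone_strategy dA dB dP dQ nK \<rho> A K P Q}"
  have ne: "SS \<noteq> {}" unfolding SS_def using trivial_strategy by blast
  have ub: "\<forall>y\<in>SS. y \<le> (1 - \<gamma>) + \<gamma> * chsh_value - \<delta>"
    unfolding SS_def \<delta>_def using win_bound assms by fastforce
  have "clone_value \<gamma> \<alpha> = Sup SS" unfolding clone_value_def SS_def ..
  also have "\<dots> \<le> (1 - \<gamma>) + \<gamma> * chsh_value - \<delta>" using cSup_least[OF ne] ub by blast
  finally show ?thesis using d0 by blast
qed

end
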